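(* Let $\mathbf x\in\mathbb F^6$ have at most one nonzero coordinate. Then $\mathcal O_{\mathbf x}$ is regular in arity $4$ if and only if either $\mathbf x=(1,0,0,0,0,0)$ (the associative relation $(a_1a_2)a_3=a_1(a_2a_3)$) or $\mathbf x=(0,0,0,0,s,0)$ with $s\neq\pm1$ (the relation $(a_1a_2)a_3=s\,a_3(a_1a_2)$, which for $s=0$ is the left-nilpotent relation $(a_1a_2)a_3=0$).
   Context: Let $\mathbb F$ be a field of characteristic $0$. Let $\mathcal T$ be the free symmetric operad over $\mathbb F$ generated by one binary operation $(a_1,a_2)\mapsto a_1a_2$ with no symmetry; its arity-$n$ component $\mathcal T(n)$ is the vector space with basis all multilinear bracketed (nonassociative) monomials in $a_1,\dots,a_n$, with the right $S_n$-action permuting arguments. For $\mathbf x=(x_1,\dots,x_6)\in\mathbb F^6$, $\mathcal O_{\mathbf x}$ denotes the quotient of $\mathcal T$ by the operad ideal $\mathcal J_{\mathbf x}$ generated by the relation (LR): $(a_1a_2)a_3 = x_1a_1(a_2a_3)+x_2a_1(a_3a_2)+x_3a_2(a_1a_3)+x_4a_2(a_3a_1)+x_5a_3(a_1a_2)+x_6a_3(a_2a_1)$. $\mathcal O_{\mathbf x}$ is regular in arity $4$ if $\mathcal O_{\mathbf x}(4)\cong\mathbb FS_4$ as $S_4$-modules. *)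

theory Defs
  imports "HOL-Combinatorics.Permutations"
begin

text \<open>Bracketed nonassociative monomials; leaves are labelled by natural numbers
  (label i stands for the argument a_i).\<close>
datatype tree = Leaf nat | Node tree tree

fun leaves :: "tree \<Rightarrow> nat list" where
  "leaves (Leaf i) = [i]"
| "leaves (Node l r) = leaves l @ leaves r"

fun relabel :: "(nat \<Rightarrow> nat) \<Rightarrow> tree \<Rightarrow> tree" where
  "relabel f (Leaf i) = Leaf (f i)"
| "relabel f (Node l r) = Node (relabel f l) (relabel f r)"

definition basis4 :: "tree set" where
  "basis4 = {t. distinct (leaves t) \<and> set (leaves t) = {1..4}}"

text \<open>Vectors are coefficient functions on monomials; T(4) = those supported on basis4.\<close>
definition T4 :: "(tree \<Rightarrow> 'a::field) set" where
  "T4 = {v. \<forall>t. v t \<noteq> 0 \<longrightarrow> t \<in> basis4}"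

definition unitv :: "tree \<Rightarrow> tree \<Rightarrow> 'a::field" where
  "unitv t = (\<lambda>s. if s = t then 1 else 0)"

text \<open>Bilinear extension of the generating binary operation (free nonassociative product).\<close>
definition tmul :: "(tree \<Rightarrow> 'a::field) \<Rightarrow> (tree \<Rightarrow> 'a) \<Rightarrow> tree \<Rightarrow> 'a" where
  "tmul p q = (\<lambda>t. case t of Leaf _ \<Rightarrow> 0 | Node l r \<Rightarrow> p l * q r)"

definition LR :: "'a::field \<Rightarrow> 'a \<Rightarrow> 'a \<Rightarrow> 'a \<Rightarrow> 'a \<Rightarrow> 'a \<Rightarrow>
    (tree \<Rightarrow> 'a) \<Rightarrow> (tree \<Rightarrow> 'a) \<Rightarrow> (tree \<Rightarrow> 'a) \<Rightarrow> tree \<Rightarrow> 'a" where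
  "LR x1 x2 x3 x4 x5 x6 p q s = (\<lambda>t.
      tmul (tmul p q) s t - x1 * tmul p (tmul q s) t - x2 * tmul p (tmul s q) t
      - x3 * tmul q (tmul p s) t - x4 * tmul q (tmul s p) t
      - x5 * tmul s (tmul p q) t - x6 * tmul s (tmul q p) t)"

definition gen :: "nat \<Rightarrow> tree \<Rightarrow> 'a::field" where
  "gen i = unitv (Leaf i)"

text \<open>Spanning set of the arity-4 component J(4) of the operad ideal generated by (LR):
  all compositions of the relation with the generating operation (mu o_i r and r o_i mu),
  with all labellings of the four arguments (i.e. closed under S_4).\<close>
definition J4gens :: "'a::field \<Rightarrow> 'a \<Rightarrow> 'a \<Rightarrow> 'a \<Rightarrow> 'a \<Rightarrow> 'a \<Rightarrow> (tree \<Rightarrow> 'a) set" where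
  "J4gens x1 x2 x3 x4 x5 x6 = (\<Union>(a,b,c,d) \<in> {(a,b,c,d). distinct [a,b,c,d] \<and> set [a,b,c,d] = {1..4::nat}}.
     { tmul (LR x1 x2 x3 x4 x5 x6 (gen a) (gen b) (gen c)) (gen d),
       tmul (gen d) (LR x1 x2 x3 x4 x5 x6 (gen a) (gen b) (gen c)),
       LR x1 x2 x3 x4 x5 x6 (tmul (gen a) (gen b)) (gen c) (gen d),
       LR x1 x2 x3 x4 x5 x6 (gen a) (tmul (gen b) (gen c)) (gen d),
       LR x1 x2 x3 x4 x5 x6 (gen a) (gen b) (tmul (gen c) (gen d)) })"

definition lin_span :: "(tree \<Rightarrow> 'a::field) set \<Rightarrow> (tree \<Rightarrow> 'a) set" where
  "lin_span G = {v. \<exists>S c. finite S \<and> S \<subseteq> G \<and> v = (\<lambda>t. \<Sum>g\<in>S. c g * g t)}"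

definition J4 :: "'a::field \<Rightarrow> 'a \<Rightarrow> 'a \<Rightarrow> 'a \<Rightarrow> 'a \<Rightarrow> 'a \<Rightarrow> (tree \<Rightarrow> 'a) set" where
  "J4 x1 x2 x3 x4 x5 x6 = lin_span (J4gens x1 x2 x3 x4 x5 x6)"

text \<open>S_4 acting on T(4) by permuting the arguments: sigma sends monomial t to relabel sigma t.\<close>
definition actT :: "(nat \<Rightarrow> nat) \<Rightarrow> (tree \<Rightarrow> 'a::field) \<Rightarrow> tree \<Rightarrow> 'a" where
  "actT \<sigma> v = (\<lambda>t. v (relabel (inv \<sigma>) t))"

text \<open>The group algebra F S_4 (regular representation): coefficient functions on permutations
  of {1..4}, sigma acting by left multiplication.\<close>
definition FS4 :: "((nat \<Rightarrow> nat) \<Rightarrow> 'a::field) set" where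
  "FS4 = {f. \<forall>\<tau>. f \<tau> \<noteq> 0 \<longrightarrow> \<tau> permutes {1..4}}"

definition actS :: "(nat \<Rightarrow> nat) \<Rightarrow> ((nat \<Rightarrow> nat) \<Rightarrow> 'a::field) \<Rightarrow> (nat \<Rightarrow> nat) \<Rightarrow> 'a" where
  "actS \<sigma> f = (\<lambda>\<tau>. f (inv \<sigma> \<circ> \<tau>))"

text \<open>O_x(4) = T(4)/J(4) is isomorphic to F S_4 as an S_4-module; by the first isomorphism
  theorem this means: there is an S_4-equivariant linear surjection T(4) -> F S_4 whose
  kernel is exactly J(4).\<close>
definition regular_arity4 :: "'a::field \<Rightarrow> 'a \<Rightarrow> 'a \<Rightarrow> 'a \<Rightarrow> 'a \<Rightarrow> 'a \<Rightarrow> bool" where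
  "regular_arity4 x1 x2 x3 x4 x5 x6 \<longleftrightarrow>
    (\<exists>\<phi> :: (tree \<Rightarrow> 'a) \<Rightarrow> ((nat \<Rightarrow> nat) \<Rightarrow> 'a).
       (\<forall>u\<in>T4. \<forall>v\<in>T4. \<phi> (\<lambda>t. u t + v t) = (\<lambda>\<tau>. \<phi> u \<tau> + \<phi> v \<tau>)) \<and>
       (\<forall>u\<in>T4. \<forall>c. \<phi> (\<lambda>t. c * u t) = (\<lambda>\<tau>. c * \<phi> u \<tau>)) \<and>
       \<phi> ` T4 = FS4 \<and>
       (\<forall>\<sigma>. \<sigma> permutes {1..4} \<longrightarrow> (\<forall>v\<in>T4. \<phi> (actT \<sigma> v) = actS \<sigma> (\<phi> v))) \<and>
       {v\<in>T4. \<phi> v = (\<lambda>_. 0)} = J4 x1 x2 x3 x4 x5 x6)"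

end

theory Submission
  imports Defs "HOL-Library.Function_Algebras" "HOL.Vector_Spaces"
begin


definition sc :: "'a::field \<Rightarrow> ('b \<Rightarrow> 'a) \<Rightarrow> ('b \<Rightarrow> 'a)" where
  "sc c f = (\<lambda>x. c * f x)"

interpretation FV: vector_space "sc :: 'a::field \<Rightarrow> ('b \<Rightarrow> 'a) \<Rightarrow> ('b \<Rightarrow> 'a)"
  by unfold_locales (auto simp: sc_def fun_eq_iff algebra_simps)

lemma sc_apply[simp]: "sc c f x = c * f x" by (simp add: sc_def)

lemma sum_fun_apply: "finite A \<Longrightarrow> (\<Sum>i\<in>A. f i) x = (\<Sum>i\<in>A. f i x)"
  by (induction A rule: finite_induct) auto

lemma lin_span_eq: "lin_span G = FV.span G"
proof -
  have eq: "(\<lambda>t. \<Sum>g\<in>S. c g * g t) = (\<Sum>g\<in>S. sc (c g) g)" if "finite S" for S and c :: "_ \<Rightarrow> 'a"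
    using that by (simp add: fun_eq_iff sum_fun_apply)
  show ?thesis
  proof
    show "lin_span G \<subseteq> FV.span G"
    proof
      fix v assume "v \<in> lin_span G"
      then obtain t r where "finite t" "t \<subseteq> G" "v = (\<lambda>x. \<Sum>a\<in>t. r a * a x)"
        unfolding lin_span_def by blast
      then have "v = (\<Sum>a\<in>t. sc (r a) a)" using eq[of t r] by simp
      then show "v \<in> FV.span G" unfolding FV.span_explicit using \<open>finite t\<close> \<open>t \<subseteq> G\<close> by blast
    qed
    show "FV.span G \<subseteq> lin_span G"
    proof
      fix v assume "v \<in> FV.span G"
      then obtain t r where "finite t" "t \<subseteq> G" "v = (\<Sum>a\<in>t. sc (r a) a)"
        unfolding FV.span_explicit by blast
      then have "v = (\<lambda>x. \<Sum>a\<in>t. r a * a x)" using eq[of t r] by simp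
      then show "v \<in> lin_span G" unfolding lin_span_def using \<open>finite t\<close> \<open>t \<subseteq> G\<close> by blast
    qed
  qed
qed

lemma J4_span: "J4 x1 x2 x3 x4 x5 x6 = FV.span (J4gens x1 x2 x3 x4 x5 x6)"
  by (simp add: J4_def lin_span_eq)

abbreviation u :: "tree \<Rightarrow> tree \<Rightarrow> 'a::field" where "u \<equiv> unitv"
abbreviation "S1 a b c d \<equiv> Node (Node (Node (Leaf a) (Leaf b)) (Leaf c)) (Leaf d)"
abbreviation "S2 a b c d \<equiv> Node (Node (Leaf a) (Node (Leaf b) (Leaf c))) (Leaf d)"
abbreviation "S3 a b c d \<equiv> Node (Node (Leaf a) (Leaf b)) (Node (Leaf c) (Leaf d))"
abbreviation "S4 a b c d \<equiv> Node (Leaf a) (Node (Node (Leaf b) (Leaf c)) (Leaf d))"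
abbreviation "S5 a b c d \<equiv> Node (Leaf a) (Node (Leaf b) (Node (Leaf c) (Leaf d)))"

definition lab :: "nat \<Rightarrow> nat \<Rightarrow> nat \<Rightarrow> nat \<Rightarrow> bool" where
  "lab a b c d \<longleftrightarrow> distinct [a,b,c,d] \<and> set [a,b,c,d] = {1..4}"

lemma lab_iff: "lab a b c d \<longleftrightarrow> distinct [a,b,c,d] \<and> a \<in> {1..4} \<and> b \<in> {1..4} \<and> c \<in> {1..4} \<and> d \<in> {1..4}"
proof
  assume "lab a b c d" then show "distinct [a,b,c,d] \<and> a \<in> {1..4} \<and> b \<in> {1..4} \<and> c \<in> {1..4} \<and> d \<in> {1..4}"
    unfolding lab_def by auto
next
  assume h: "distinct [a,b,c,d] \<and> a \<in> {1..4} \<and> b \<in> {1..4} \<and> c \<in> {1..4} \<and> d \<in> {1..4}"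
  then have "set [a,b,c,d] \<subseteq> {1..4::nat}" by auto
  moreover have "card (set [a,b,c,d]) = card {1..4::nat}" using h distinct_card[of "[a,b,c,d]"] by simp
  ultimately have "set [a,b,c,d] = {1..4}" by (intro card_subset_eq) auto
  then show "lab a b c d" using h unfolding lab_def by blast
qed


lemma tmul_unit: "tmul (unitv p) (unitv q) = (unitv (Node p q) :: tree \<Rightarrow> 'a::field)"
  by (auto simp: fun_eq_iff tmul_def unitv_def split: tree.split)
lemma tmul_diff_left: "tmul (f - g) h = tmul f h - tmul g h"
  by (auto simp: fun_eq_iff tmul_def algebra_simps split: tree.split)
lemma tmul_diff_right: "tmul h (f - g) = tmul h f - tmul h g"
  by (auto simp: fun_eq_iff tmul_def algebra_simps split: tree.split)
lemma tmul_sc_left: "tmul (sc c f) h = sc c (tmul f h)"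
  by (auto simp: fun_eq_iff tmul_def algebra_simps split: tree.split)
lemma tmul_sc_right: "tmul h (sc c f) = sc c (tmul h f)"
  by (auto simp: fun_eq_iff tmul_def algebra_simps split: tree.split)
lemma LR_eq: "LR x1 x2 x3 x4 x5 x6 p q s = tmul (tmul p q) s - sc x1 (tmul p (tmul q s))
   - sc x2 (tmul p (tmul s q)) - sc x3 (tmul q (tmul p s)) - sc x4 (tmul q (tmul s p))
   - sc x5 (tmul s (tmul p q)) - sc x6 (tmul s (tmul q p))"
  by (simp add: fun_eq_iff LR_def)
lemma gen_eq: "gen i = unitv (Leaf i)" by (simp add: gen_def)

lemmas expand = LR_eq gen_eq tmul_unit tmul_diff_left tmul_diff_right tmul_sc_left tmul_sc_right
  FV.scale_right_diff_distrib

lemma labJ: "lab a b c d \<Longrightarrow> (a,b,c,d) \<in> {(a,b,c,d). distinct [a,b,c,d] \<and> set [a,b,c,d] = {1..4::nat}}"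
  by (simp add: lab_def)

definition E1 :: "'a::field \<Rightarrow> 'a \<Rightarrow> 'a \<Rightarrow> 'a \<Rightarrow> 'a \<Rightarrow> 'a \<Rightarrow> nat \<Rightarrow> nat \<Rightarrow> nat \<Rightarrow> nat \<Rightarrow> tree \<Rightarrow> 'a" where
  "E1 x1 x2 x3 x4 x5 x6 a b c d = u (S1 a b c d) - sc x1 (u (S2 a b c d)) - sc x2 (u (S2 a c b d)) - sc x3 (u (S2 b a c d))
    - sc x4 (u (S2 b c a d)) - sc x5 (u (S2 c a b d)) - sc x6 (u (S2 c b a d))"
definition E2 :: "'a::field \<Rightarrow> 'a \<Rightarrow> 'a \<Rightarrow> 'a \<Rightarrow> 'a \<Rightarrow> 'a \<Rightarrow> nat \<Rightarrow> nat \<Rightarrow> nat \<Rightarrow> nat \<Rightarrow> tree \<Rightarrow> 'a" where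
  "E2 x1 x2 x3 x4 x5 x6 a b c d = u (S4 d a b c) - sc x1 (u (S5 d a b c)) - sc x2 (u (S5 d a c b)) - sc x3 (u (S5 d b a c))
    - sc x4 (u (S5 d b c a)) - sc x5 (u (S5 d c a b)) - sc x6 (u (S5 d c b a))"
definition E3 :: "'a::field \<Rightarrow> 'a \<Rightarrow> 'a \<Rightarrow> 'a \<Rightarrow> 'a \<Rightarrow> 'a \<Rightarrow> nat \<Rightarrow> nat \<Rightarrow> nat \<Rightarrow> nat \<Rightarrow> tree \<Rightarrow> 'a" where
  "E3 x1 x2 x3 x4 x5 x6 a b c d = u (S1 a b c d) - sc x1 (u (S3 a b c d)) - sc x2 (u (S3 a b d c)) - sc x3 (u (S4 c a b d))
    - sc x4 (u (S5 c d a b)) - sc x5 (u (S4 d a b c)) - sc x6 (u (S5 d c a b))"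
definition E4 :: "'a::field \<Rightarrow> 'a \<Rightarrow> 'a \<Rightarrow> 'a \<Rightarrow> 'a \<Rightarrow> 'a \<Rightarrow> nat \<Rightarrow> nat \<Rightarrow> nat \<Rightarrow> nat \<Rightarrow> tree \<Rightarrow> 'a" where
  "E4 x1 x2 x3 x4 x5 x6 a b c d = u (S2 a b c d) - sc x1 (u (S4 a b c d)) - sc x2 (u (S5 a d b c)) - sc x3 (u (S3 b c a d))
    - sc x4 (u (S3 b c d a)) - sc x5 (u (S5 d a b c)) - sc x6 (u (S4 d b c a))"
definition E5 :: "'a::field \<Rightarrow> 'a \<Rightarrow> 'a \<Rightarrow> 'a \<Rightarrow> 'a \<Rightarrow> 'a \<Rightarrow> nat \<Rightarrow> nat \<Rightarrow> nat \<Rightarrow> nat \<Rightarrow> tree \<Rightarrow> 'a" where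
  "E5 x1 x2 x3 x4 x5 x6 a b c d = u (S3 a b c d) - sc x1 (u (S5 a b c d)) - sc x2 (u (S4 a c d b)) - sc x3 (u (S5 b a c d))
    - sc x4 (u (S4 b c d a)) - sc x5 (u (S3 c d a b)) - sc x6 (u (S3 c d b a))"

lemma J4gens_cases:
  assumes "g \<in> J4gens x1 x2 x3 x4 x5 x6"
  obtains a b c d where "lab a b c d" "g = E1 x1 x2 x3 x4 x5 x6 a b c d \<or> g = E2 x1 x2 x3 x4 x5 x6 a b c d
    \<or> g = E3 x1 x2 x3 x4 x5 x6 a b c d \<or> g = E4 x1 x2 x3 x4 x5 x6 a b c d \<or> g = E5 x1 x2 x3 x4 x5 x6 a b c d"
proof -
  from assms obtain a b c d where l: "lab a b c d" and
    "g \<in> { tmul (LR x1 x2 x3 x4 x5 x6 (gen a) (gen b) (gen c)) (gen d),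
       tmul (gen d) (LR x1 x2 x3 x4 x5 x6 (gen a) (gen b) (gen c)),
       LR x1 x2 x3 x4 x5 x6 (tmul (gen a) (gen b)) (gen c) (gen d),
       LR x1 x2 x3 x4 x5 x6 (gen a) (tmul (gen b) (gen c)) (gen d),
       LR x1 x2 x3 x4 x5 x6 (gen a) (gen b) (tmul (gen c) (gen d)) }"
    unfolding J4gens_def lab_def by blast
  then have "g = E1 x1 x2 x3 x4 x5 x6 a b c d \<or> g = E2 x1 x2 x3 x4 x5 x6 a b c d
    \<or> g = E3 x1 x2 x3 x4 x5 x6 a b c d \<or> g = E4 x1 x2 x3 x4 x5 x6 a b c d \<or> g = E5 x1 x2 x3 x4 x5 x6 a b c d"
    by (auto simp: expand E1_def E2_def E3_def E4_def E5_def)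
  then show ?thesis using l that by blast
qed

lemma G1: assumes "lab a b c d" shows "E1 x1 x2 x3 x4 x5 x6 a b c d \<in> J4 x1 x2 x3 x4 x5 x6"
proof -
  have "tmul (LR x1 x2 x3 x4 x5 x6 (gen a) (gen b) (gen c)) (gen d) \<in> J4gens x1 x2 x3 x4 x5 x6"
    unfolding J4gens_def using labJ[OF assms] by blast
  then show ?thesis unfolding J4_span E1_def by (simp add: expand FV.span_base)
qed
lemma G2: assumes "lab a b c d" shows "E2 x1 x2 x3 x4 x5 x6 a b c d \<in> J4 x1 x2 x3 x4 x5 x6"
proof -
  have "tmul (gen d) (LR x1 x2 x3 x4 x5 x6 (gen a) (gen b) (gen c)) \<in> J4gens x1 x2 x3 x4 x5 x6"
    unfolding J4gens_def using labJ[OF assms] by blast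
  then show ?thesis unfolding J4_span E2_def by (simp add: expand FV.span_base)
qed
lemma G3: assumes "lab a b c d" shows "E3 x1 x2 x3 x4 x5 x6 a b c d \<in> J4 x1 x2 x3 x4 x5 x6"
proof -
  have "LR x1 x2 x3 x4 x5 x6 (tmul (gen a) (gen b)) (gen c) (gen d) \<in> J4gens x1 x2 x3 x4 x5 x6"
    unfolding J4gens_def using labJ[OF assms] by blast
  then show ?thesis unfolding J4_span E3_def by (simp add: expand FV.span_base)
qed
lemma G4: assumes "lab a b c d" shows "E4 x1 x2 x3 x4 x5 x6 a b c d \<in> J4 x1 x2 x3 x4 x5 x6"
proof -
  have "LR x1 x2 x3 x4 x5 x6 (gen a) (tmul (gen b) (gen c)) (gen d) \<in> J4gens x1 x2 x3 x4 x5 x6"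
    unfolding J4gens_def using labJ[OF assms] by blast
  then show ?thesis unfolding J4_span E4_def by (simp add: expand FV.span_base)
qed
lemma G5: assumes "lab a b c d" shows "E5 x1 x2 x3 x4 x5 x6 a b c d \<in> J4 x1 x2 x3 x4 x5 x6"
proof -
  have "LR x1 x2 x3 x4 x5 x6 (gen a) (gen b) (tmul (gen c) (gen d)) \<in> J4gens x1 x2 x3 x4 x5 x6"
    unfolding J4gens_def using labJ[OF assms] by blast
  then show ?thesis unfolding J4_span E5_def by (simp add: expand FV.span_base)
qed


lemma leaves_ne: "leaves t \<noteq> []"
  by (induction t) auto

lemma len_pos: "length (leaves t) \<ge> 1"
  using leaves_ne[of t] by (cases "leaves t") auto

lemma len1: "length (leaves t) = 1 \<Longrightarrow> \<exists>a. t = Leaf a"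
proof (cases t)
  case (Node l r)
  assume "length (leaves t) = 1"
  then show ?thesis using Node len_pos[of l] len_pos[of r] by simp
qed auto

lemma len2: "length (leaves t) = 2 \<Longrightarrow> \<exists>a b. t = Node (Leaf a) (Leaf b)"
proof (cases t)
  case (Node l r)
  assume h: "length (leaves t) = 2"
  then have "length (leaves l) = 1" "length (leaves r) = 1" using Node len_pos[of l] len_pos[of r] by auto
  then show ?thesis using Node len1 by blast
qed auto

lemma len3: "length (leaves t) = 3 \<Longrightarrow> \<exists>a b c. t = Node (Node (Leaf a) (Leaf b)) (Leaf c) \<or> t = Node (Leaf a) (Node (Leaf b) (Leaf c))"
proof (cases t)
  case (Node l r)
  assume h: "length (leaves t) = 3"
  then have "(length (leaves l) = 1 \<and> length (leaves r) = 2) \<or> (length (leaves l) = 2 \<and> length (leaves r) = 1)"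
    using Node len_pos[of l] len_pos[of r] by auto
  then show ?thesis
  proof (elim disjE conjE)
    assume "length (leaves l) = 1" "length (leaves r) = 2"
    then obtain a b c where "l = Leaf a" "r = Node (Leaf b) (Leaf c)" using len1 len2 by metis
    then show ?thesis using Node by simp
  next
    assume "length (leaves l) = 2" "length (leaves r) = 1"
    then obtain a b c where "r = Leaf c" "l = Node (Leaf a) (Leaf b)" using len1 len2 by metis
    then show ?thesis using Node by simp
  qed
qed auto

lemma len4: "length (leaves t) = 4 \<Longrightarrow> \<exists>a b c d. t = S1 a b c d \<or> t = S2 a b c d \<or> t = S3 a b c d \<or> t = S4 a b c d \<or> t = S5 a b c d"
proof (cases t)
  case (Node l r)
  assume h: "length (leaves t) = 4"
  then have "(length (leaves l) = 1 \<and> length (leaves r) = 3) \<or> (length (leaves l) = 2 \<and> length (leaves r) = 2)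
     \<or> (length (leaves l) = 3 \<and> length (leaves r) = 1)"
    using Node len_pos[of l] len_pos[of r] by auto
  then show ?thesis
  proof (elim disjE conjE)
    assume "length (leaves l) = 1" "length (leaves r) = 3"
    then obtain a b c d where "l = Leaf a" "r = Node (Node (Leaf b) (Leaf c)) (Leaf d) \<or> r = Node (Leaf b) (Node (Leaf c) (Leaf d))"
      using len1 len3 by metis
    then show ?thesis using Node by auto
  next
    assume "length (leaves l) = 2" "length (leaves r) = 2"
    then obtain a b c d where "l = Node (Leaf a) (Leaf b)" "r = Node (Leaf c) (Leaf d)" using len2 by metis
    then show ?thesis using Node by auto
  next
    assume "length (leaves l) = 3" "length (leaves r) = 1"
    then obtain a b c d where "r = Leaf d" "l = Node (Node (Leaf a) (Leaf b)) (Leaf c) \<or> l = Node (Leaf a) (Node (Leaf b) (Leaf c))"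
      using len1 len3 by metis
    then show ?thesis using Node by auto
  qed
qed auto

lemma basis4_iff: "t \<in> basis4 \<longleftrightarrow> (\<exists>a b c d. lab a b c d \<and> (t = S1 a b c d \<or> t = S2 a b c d \<or> t = S3 a b c d \<or> t = S4 a b c d \<or> t = S5 a b c d))"
proof
  assume h: "t \<in> basis4"
  then have "length (leaves t) = 4"
    unfolding basis4_def using distinct_card[of "leaves t"] by auto
  then obtain a b c d where sh: "t = S1 a b c d \<or> t = S2 a b c d \<or> t = S3 a b c d \<or> t = S4 a b c d \<or> t = S5 a b c d"
    using len4 by blast
  then have "leaves t = [a,b,c,d]" by auto
  then have "lab a b c d" using h unfolding basis4_def lab_def by simp
  with sh show "\<exists>a b c d. lab a b c d \<and> (t = S1 a b c d \<or> t = S2 a b c d \<or> t = S3 a b c d \<or> t = S4 a b c d \<or> t = S5 a b c d)"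
    by (intro exI[of _ a] exI[of _ b] exI[of _ c] exI[of _ d]) simp
next
  assume "\<exists>a b c d. lab a b c d \<and> (t = S1 a b c d \<or> t = S2 a b c d \<or> t = S3 a b c d \<or> t = S4 a b c d \<or> t = S5 a b c d)"
  then obtain a b c d where l: "lab a b c d" and sh: "t = S1 a b c d \<or> t = S2 a b c d \<or> t = S3 a b c d \<or> t = S4 a b c d \<or> t = S5 a b c d"
    by blast
  from sh have "leaves t = [a,b,c,d]" by auto
  then show "t \<in> basis4" using l unfolding basis4_def lab_def by simp
qed

lemma S_basis:
  assumes "lab a b c d"
  shows "S1 a b c d \<in> basis4" "S2 a b c d \<in> basis4" "S3 a b c d \<in> basis4" "S4 a b c d \<in> basis4" "S5 a b c d \<in> basis4"
  using assms unfolding basis4_def lab_def by simp_all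

lemma finite_basis4: "finite basis4"
proof -
  define F where "F = {1..4::nat} \<times> {1..4::nat} \<times> {1..4::nat} \<times> {1..4::nat}"
  define B where "B = (\<lambda>(a,b,c,d). {S1 a b c d, S2 a b c d, S3 a b c d, S4 a b c d, S5 a b c d})"
  have "basis4 \<subseteq> (\<Union>p\<in>F. B p)"
  proof
    fix t assume "t \<in> basis4"
    then obtain a b c d where l: "lab a b c d" and sh: "t = S1 a b c d \<or> t = S2 a b c d \<or> t = S3 a b c d \<or> t = S4 a b c d \<or> t = S5 a b c d"
      unfolding basis4_iff by blast
    have "(a,b,c,d) \<in> F" using l unfolding lab_iff F_def by simp
    moreover have "t \<in> B (a,b,c,d)" using sh unfolding B_def by simp
    ultimately show "t \<in> (\<Union>p\<in>F. B p)" by blast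
  qed
  moreover have "finite (\<Union>p\<in>F. B p)" unfolding F_def B_def by (intro finite_UN_I) auto
  ultimately show ?thesis by (rule finite_subset)
qed

lemma T4_subspace: "FV.subspace (T4 :: (tree \<Rightarrow> 'a::field) set)"
  unfolding FV.subspace_def T4_def by (auto, metis add.right_neutral)

lemma u_T4: "t \<in> basis4 \<Longrightarrow> unitv t \<in> T4"
  unfolding T4_def unitv_def by auto

lemma span_T4: "W \<subseteq> T4 \<Longrightarrow> FV.span W \<subseteq> T4"
  using FV.span_minimal T4_subspace by blast

lemma T4_decomp: assumes "v \<in> T4" shows "v = (\<Sum>t\<in>basis4. sc (v t) (unitv t))"
proof
  fix x
  have "(\<Sum>t\<in>basis4. sc (v t) (unitv t)) x = (\<Sum>t\<in>basis4. v t * (if x = t then 1 else 0))"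
    by (simp add: sum_fun_apply finite_basis4 unitv_def eq_commute)
  also have "\<dots> = (if x \<in> basis4 then v x else 0)"
    by (simp add: if_distrib finite_basis4 cong: if_cong)
  also have "\<dots> = v x" using assms unfolding T4_def by auto
  finally show "v x = (\<Sum>t\<in>basis4. sc (v t) (unitv t)) x" by simp
qed

lemma E_T4: assumes "lab a b c d"
  shows "E1 x1 x2 x3 x4 x5 x6 a b c d \<in> T4" "E2 x1 x2 x3 x4 x5 x6 a b c d \<in> T4" "E3 x1 x2 x3 x4 x5 x6 a b c d \<in> T4"
    "E4 x1 x2 x3 x4 x5 x6 a b c d \<in> T4" "E5 x1 x2 x3 x4 x5 x6 a b c d \<in> T4"
proof -
  have l: "lab a b c d" "lab a c b d" "lab b a c d" "lab b c a d" "lab c a b d" "lab c b a d" "lab d a b c" "lab d a c b"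
    "lab d b a c" "lab d b c a" "lab d c a b" "lab d c b a" "lab a b d c" "lab c d a b" "lab a d b c" "lab b c d a"
    "lab a c d b" "lab c d b a"
    using assms by (auto simp: lab_iff)
  have sub: "\<And>f g. f \<in> T4 \<Longrightarrow> g \<in> T4 \<Longrightarrow> f - g \<in> T4" "\<And>c f. f \<in> T4 \<Longrightarrow> sc c f \<in> T4"
    using FV.subspace_diff[OF T4_subspace] FV.subspace_scale[OF T4_subspace] by blast+
  show "E1 x1 x2 x3 x4 x5 x6 a b c d \<in> T4" "E2 x1 x2 x3 x4 x5 x6 a b c d \<in> T4" "E3 x1 x2 x3 x4 x5 x6 a b c d \<in> T4"
    "E4 x1 x2 x3 x4 x5 x6 a b c d \<in> T4" "E5 x1 x2 x3 x4 x5 x6 a b c d \<in> T4"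
    unfolding E1_def E2_def E3_def E4_def E5_def
    by (simp_all add: sub u_T4 S_basis l)
qed

lemma J4gens_T4: "J4gens x1 x2 x3 x4 x5 x6 \<subseteq> T4"
  using E_T4 by (auto elim!: J4gens_cases)

lemma J4_T4: "J4 x1 x2 x3 x4 x5 x6 \<subseteq> T4"
  unfolding J4_span by (rule span_T4[OF J4gens_T4])

definition Lin :: "(tree \<Rightarrow> 'a::field) \<Rightarrow> (tree \<Rightarrow> 'a) \<Rightarrow> 'a" where
  "Lin k v = (\<Sum>t\<in>basis4. v t * k t)"

lemma Lin_add[simp]: "Lin k (f + g) = Lin k f + Lin k g"
  by (simp add: Lin_def algebra_simps sum.distrib)
lemma Lin_diff[simp]: "Lin k (f - g) = Lin k f - Lin k g"
  by (simp add: Lin_def algebra_simps sum_subtractf)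
lemma Lin_sc[simp]: "Lin k (sc c f) = c * Lin k f"
  by (simp add: Lin_def algebra_simps sum_distrib_left)
lemma Lin_zero[simp]: "Lin k 0 = 0"
  by (simp add: Lin_def)
lemma Lin_zero'[simp]: "Lin k (\<lambda>_. 0) = 0"
  by (simp add: Lin_def)
lemma Lin_u[simp]: "t \<in> basis4 \<Longrightarrow> Lin k (unitv t) = k t"
proof -
  assume "t \<in> basis4"
  have "(\<lambda>ta. unitv t ta * k ta) = (\<lambda>ta. if t = ta then k t else 0)" by (auto simp: unitv_def fun_eq_iff)
  then have "Lin k (unitv t) = (\<Sum>ta\<in>basis4. if t = ta then k t else 0)" unfolding Lin_def by metis
  then show ?thesis using \<open>t \<in> basis4\<close> by (simp add: finite_basis4)
qed
lemma Lin_sum: "finite A \<Longrightarrow> Lin k (\<Sum>i\<in>A. f i) = (\<Sum>i\<in>A. Lin k (f i))"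
proof (induction A rule: finite_induct)
  case empty then show ?case by (simp only: sum.empty Lin_zero)
next
  case (insert x F)
  show ?case unfolding sum.insert[OF insert(1,2)] Lin_add insert(3) ..
qed

lemma Lin_span0: assumes "\<And>g. g \<in> G \<Longrightarrow> Lin k g = 0" "v \<in> FV.span G" shows "Lin k v = 0"
proof -
  have "FV.subspace {v. Lin k v = 0}" unfolding FV.subspace_def by simp
  then show ?thesis using FV.span_induct[OF assms(2), of "\<lambda>v. Lin k v = 0"] assms(1) by blast
qed


definition P4 :: "(nat \<Rightarrow> nat) set" where "P4 = {\<tau>. \<tau> permutes {1..4}}"
definition word :: "(nat \<Rightarrow> nat) \<Rightarrow> nat list" where "word \<tau> = [\<tau> 1, \<tau> 2, \<tau> 3, \<tau> 4]"
definition pw :: "nat list \<Rightarrow> nat \<Rightarrow> nat" where "pw w = (\<lambda>i. if i \<in> {1..4} then w ! (i - 1) else i)"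

lemma finite_P4: "finite P4" unfolding P4_def by (rule finite_permutations) simp
lemma card_P4: "card P4 = 24"
proof -
  have "card P4 = fact 4" unfolding P4_def by (rule card_permutations) auto
  then show ?thesis by (simp add: fact_numeral)
qed

lemma four_cases: "(i::nat) \<in> {1..4} \<longleftrightarrow> i = 1 \<or> i = 2 \<or> i = 3 \<or> i = 4" by auto

lemma len4_list: "length w = 4 \<Longrightarrow> \<exists>a b c d. w = [a,b,c,d]"
  by (cases w; cases "tl w"; cases "tl (tl w)"; cases "tl (tl (tl w))"; auto)

lemma word_map: "word \<tau> = map \<tau> [1,2,3,4]" by (simp add: word_def)

lemma set1234: "set [1,2,3,4::nat] = {1..4}" by (auto simp: four_cases)

lemma word_lab: "\<tau> permutes {1..4} \<Longrightarrow> distinct (word \<tau>) \<and> set (word \<tau>) = {1..4}"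
proof -
  assume p: "\<tau> permutes {1..4}"
  have "inj \<tau>" using permutes_inj[OF p] .
  have "inj_on \<tau> (set [1,2,3,4::nat])" using \<open>inj \<tau>\<close> by (rule inj_on_subset) simp
  then have "distinct (map \<tau> [1,2,3,4::nat])" by (simp only: distinct_map) simp
  then have "distinct (word \<tau>)" unfolding word_map .
  moreover have "set (word \<tau>) = \<tau> ` {1..4}" unfolding word_map set_map set1234 ..
  ultimately show ?thesis using permutes_image[OF p] by simp
qed

lemma pw_perm: assumes "distinct w" "set w = {1..4}" shows "pw w permutes {1..4}"
proof -
  have "length w = 4" using assms distinct_card[of w] by simp
  then obtain a b c d where w: "w = [a,b,c,d]" using len4_list by blast
  have e: "pw w 1 = a" "pw w 2 = b" "pw w 3 = c" "pw w 4 = d" unfolding pw_def w by simp_all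
  have s: "{1..4::nat} = {1,2,3,4}" by auto
  have "inj_on (pw w) {1..4}" unfolding s using e assms(1) w by simp
  moreover have "pw w ` {1..4} = {1..4}" using e assms(2) w unfolding s by simp
  ultimately have "bij_betw (pw w) {1..4} {1..4}" unfolding bij_betw_def by blast
  then show ?thesis by (rule bij_imp_permutes) (simp add: pw_def del: atLeastAtMost_iff)
qed

lemma word_pw: "length w = 4 \<Longrightarrow> word (pw w) = w"
proof -
  assume "length w = 4"
  then obtain a b c d where "w = [a,b,c,d]" using len4_list by blast
  then show ?thesis by (simp add: word_def pw_def)
qed

lemma pw_word: assumes "\<tau> permutes {1..4}" shows "pw (word \<tau>) = \<tau>"
proof
  fix i show "pw (word \<tau>) i = \<tau> i"
  proof (cases "i \<in> {1..4}")
    case True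
    then have "i = 1 \<or> i = 2 \<or> i = 3 \<or> i = 4" by auto
    then show ?thesis by (auto simp: pw_def word_def)
  next
    case False
    then show ?thesis using permutes_not_in[OF assms False] by (simp add: pw_def del: atLeastAtMost_iff)
  qed
qed

lemma word_inj: "\<tau> \<in> P4 \<Longrightarrow> \<tau>' \<in> P4 \<Longrightarrow> word \<tau> = word \<tau>' \<Longrightarrow> \<tau> = \<tau>'"
  unfolding P4_def by (metis pw_word mem_Collect_eq)

lemma relabel_comp: "relabel f (relabel g t) = relabel (f \<circ> g) t"
  by (induction t) auto
lemma relabel_id: "relabel id t = t"
  by (induction t) auto
lemma leaves_relabel: "leaves (relabel f t) = map f (leaves t)"
  by (induction t) auto

lemma relabel_basis: assumes p: "\<sigma> permutes {1..4}" and t: "t \<in> basis4" shows "relabel \<sigma> t \<in> basis4"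
proof -
  have "inj \<sigma>" using permutes_inj[OF p] .
  then have "inj_on \<sigma> A" for A by (metis inj_on_subset subset_UNIV)
  then show ?thesis using t permutes_image[OF p] unfolding basis4_def
    by (simp add: leaves_relabel distinct_map)
qed

lemma relabel_bij: assumes p: "\<sigma> permutes {1..4}" shows "bij_betw (relabel \<sigma>) basis4 basis4"
proof (rule bij_betw_byWitness[where f'="relabel (inv \<sigma>)"])
  show "\<forall>a\<in>basis4. relabel (inv \<sigma>) (relabel \<sigma> a) = a"
    by (simp add: relabel_comp permutes_inv_o[OF p] relabel_id)
  show "\<forall>a\<in>basis4. relabel \<sigma> (relabel (inv \<sigma>) a) = a"
    by (simp add: relabel_comp permutes_inv_o[OF p] relabel_id)
  show "relabel \<sigma> ` basis4 \<subseteq> basis4" using relabel_basis[OF p] by blast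
  show "relabel (inv \<sigma>) ` basis4 \<subseteq> basis4" using relabel_basis[OF permutes_inv[OF p]] by blast
qed

definition dl :: "(nat \<Rightarrow> nat) \<Rightarrow> (nat \<Rightarrow> nat) \<Rightarrow> 'a::field" where
  "dl \<tau> = (\<lambda>\<rho>. if \<rho> = \<tau> then 1 else 0)"

lemma dl_inj: "inj (dl :: _ \<Rightarrow> _ \<Rightarrow> 'a::field)"
  by (rule injI) (metis dl_def one_neq_zero)

lemma card_dl: "card ((dl :: _ \<Rightarrow> _ \<Rightarrow> 'a::field) ` P4) = 24"
proof -
  have "inj_on (dl :: _ \<Rightarrow> _ \<Rightarrow> 'a) P4" using dl_inj by (rule inj_on_subset) simp
  then show ?thesis using card_image card_P4 by metis
qed

lemma FS4_span: "FS4 \<subseteq> FV.span ((dl :: _ \<Rightarrow> _ \<Rightarrow> 'a::field) ` P4)"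
proof
  fix f :: "(nat \<Rightarrow> nat) \<Rightarrow> 'a" assume f: "f \<in> FS4"
  have "f = (\<Sum>\<tau>\<in>P4. sc (f \<tau>) (dl \<tau>))"
  proof
    fix \<rho>
    have "(\<Sum>\<tau>\<in>P4. sc (f \<tau>) (dl \<tau>)) \<rho> = (\<Sum>\<tau>\<in>P4. if \<rho> = \<tau> then f \<rho> else 0)"
      by (simp add: sum_fun_apply finite_P4 dl_def if_distrib cong: if_cong)
    also have "\<dots> = f \<rho>" using f finite_P4 unfolding FS4_def P4_def by (cases "\<rho> permutes {1..4}") auto
    finally show "f \<rho> = (\<Sum>\<tau>\<in>P4. sc (f \<tau>) (dl \<tau>)) \<rho>" by simp
  qed
  also have "\<dots> \<in> FV.span (dl ` P4)"
    by (intro FV.span_sum FV.span_scale FV.span_base) auto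
  finally show "f \<in> FV.span (dl ` P4)" .
qed

lemma dl_indep: "FV.independent ((dl :: _ \<Rightarrow> _ \<Rightarrow> 'a::field) ` P4)"
proof -
  have fin: "finite ((dl :: _ \<Rightarrow> _ \<Rightarrow> 'a) ` P4)" using finite_P4 by simp
  show ?thesis unfolding FV.dependent_finite[OF fin]
  proof
    assume "\<exists>c. (\<exists>v\<in>(dl :: _ \<Rightarrow> _ \<Rightarrow> 'a) ` P4. c v \<noteq> 0) \<and> (\<Sum>v\<in>dl ` P4. sc (c v) v) = 0"
    then obtain c v where v: "v \<in> (dl :: _ \<Rightarrow> _ \<Rightarrow> 'a) ` P4" and cv: "c v \<noteq> 0"
      and s: "(\<Sum>v\<in>dl ` P4. sc (c v) v) = 0" by blast
    from v obtain \<tau> where \<tau>: "\<tau> \<in> P4" "v = dl \<tau>" by blast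
    have "0 = (\<Sum>v\<in>dl ` P4. sc (c v) v) \<tau>" using s by simp
    also have "\<dots> = (\<Sum>\<rho>\<in>P4. c (dl \<rho>) * dl \<rho> \<tau>)"
      by (simp add: sum_fun_apply finite_P4 sum.reindex inj_on_subset[OF dl_inj])
    also have "\<dots> = (\<Sum>\<rho>\<in>P4. if \<rho> = \<tau> then c (dl \<tau>) else 0)"
      by (intro sum.cong) (auto simp: dl_def)
    also have "\<dots> = c v" using \<tau> finite_P4 by simp
    finally show False using cv by simp
  qed
qed


locale regmap =
  fixes \<phi> :: "(tree \<Rightarrow> 'a::field) \<Rightarrow> ((nat \<Rightarrow> nat) \<Rightarrow> 'a)" and J :: "(tree \<Rightarrow> 'a) set"
  assumes add: "\<And>u v. u \<in> T4 \<Longrightarrow> v \<in> T4 \<Longrightarrow> \<phi> (u + v) = \<phi> u + \<phi> v"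
    and scl: "\<And>u c. u \<in> T4 \<Longrightarrow> \<phi> (sc c u) = sc c (\<phi> u)"
    and img: "\<phi> ` T4 = FS4"
    and ker: "{v\<in>T4. \<phi> v = 0} = J"
begin

lemma J_T4: "v \<in> J \<Longrightarrow> v \<in> T4" using ker by blast
lemma J_0: "v \<in> J \<Longrightarrow> \<phi> v = 0" using ker by blast
lemma zero_T4: "0 \<in> T4" using FV.subspace_0[OF T4_subspace] .

lemma phi0: "\<phi> 0 = 0"
proof -
  have "\<phi> (sc 0 0) = sc 0 (\<phi> 0)" using scl zero_T4 by blast
  moreover have "sc 0 (0::tree \<Rightarrow> 'a) = 0" by (simp add: fun_eq_iff)
  moreover have "sc 0 (\<phi> 0) = 0" by (simp add: fun_eq_iff)
  ultimately show ?thesis by simp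
qed

lemma phi_diff: "p \<in> T4 \<Longrightarrow> v \<in> T4 \<Longrightarrow> \<phi> (p - v) = \<phi> p - \<phi> v"
proof -
  assume uv: "p \<in> T4" "v \<in> T4"
  have e: "p - v = p + sc (-1) v" by (simp add: fun_eq_iff)
  have m: "sc (-1) v \<in> T4" using FV.subspace_scale[OF T4_subspace uv(2)] .
  have "\<phi> (p - v) = \<phi> p + \<phi> (sc (-1) v)" unfolding e by (rule add[OF uv(1) m])
  also have "\<dots> = \<phi> p + sc (-1) (\<phi> v)" by (simp only: scl[OF uv(2)])
  also have "\<dots> = \<phi> p - \<phi> v" by (simp add: fun_eq_iff)
  finally show ?thesis .
qed

lemma phi_sum: "finite A \<Longrightarrow> (\<And>i. i \<in> A \<Longrightarrow> f i \<in> T4) \<Longrightarrow> \<phi> (\<Sum>i\<in>A. f i) = (\<Sum>i\<in>A. \<phi> (f i))"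
proof (induction A rule: finite_induct)
  case empty then show ?case by (simp only: sum.empty phi0)
next
  case (insert x F)
  have "sum f F \<in> T4" using insert(4) by (intro FV.subspace_sum[OF T4_subspace]) auto
  then show ?case unfolding sum.insert[OF insert(1,2)]
    by (simp only: add[OF insert(4)[OF insertI1] \<open>sum f F \<in> T4\<close>] insert.IH[OF insert(4)[OF insertI2]])
qed

lemma phi_lin: "finite A \<Longrightarrow> (\<And>i. i \<in> A \<Longrightarrow> f i \<in> T4) \<Longrightarrow> \<phi> (\<Sum>i\<in>A. sc (c i) (f i)) = (\<Sum>i\<in>A. sc (c i) (\<phi> (f i)))"
proof -
  assume a: "finite A" "\<And>i. i \<in> A \<Longrightarrow> f i \<in> T4"
  have "\<phi> (\<Sum>i\<in>A. sc (c i) (f i)) = (\<Sum>i\<in>A. \<phi> (sc (c i) (f i)))"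
    using a by (intro phi_sum) (auto intro: FV.subspace_scale[OF T4_subspace])
  also have "\<dots> = (\<Sum>i\<in>A. sc (c i) (\<phi> (f i)))" using a scl by simp
  finally show ?thesis .
qed

lemma small_False:
  assumes fin: "finite W" and WT: "W \<subseteq> T4" and card: "card W < 24"
    and red: "\<And>t. t \<in> basis4 \<Longrightarrow> \<exists>w\<in>FV.span W. unitv t - w \<in> J"
  shows False
proof -
  define S where "S = FV.span (\<phi> ` W)"
  have sub: "FV.subspace {w. w \<in> T4 \<and> \<phi> w \<in> S}"
    unfolding FV.subspace_def S_def
    using zero_T4 phi0 add scl FV.span_zero FV.span_add FV.span_scale
      FV.subspace_add[OF T4_subspace] FV.subspace_scale[OF T4_subspace] by auto
  have spanW: "w \<in> T4 \<and> \<phi> w \<in> S" if "w \<in> FV.span W" for w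
    using FV.span_induct[OF that sub] WT unfolding S_def by (auto intro: FV.span_base)
  have unit: "\<phi> (unitv t) \<in> S" if tb: "t \<in> basis4" for t
  proof -
    obtain w where w: "w \<in> FV.span W" "unitv t - w \<in> J" using red[OF tb] by blast
    have "\<phi> (unitv t - w) = 0" using J_0 w(2) .
    then have "\<phi> (unitv t) = \<phi> w" using phi_diff[OF u_T4[OF tb]] spanW[OF w(1)] by simp
    then show ?thesis using spanW[OF w(1)] by simp
  qed
  have FS: "FS4 \<subseteq> S"
  proof
    fix f :: "(nat \<Rightarrow> nat) \<Rightarrow> 'a" assume "f \<in> FS4"
    then obtain v where v: "v \<in> T4" "f = \<phi> v" using img by blast
    have "\<phi> v = (\<Sum>t\<in>basis4. sc (v t) (\<phi> (unitv t)))"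
      by (subst T4_decomp[OF v(1)]) (rule phi_lin[OF finite_basis4 u_T4])
    also have "\<dots> \<in> S" unfolding S_def using unit[unfolded S_def]
      by (intro FV.span_sum FV.span_scale) auto
    finally show "f \<in> S" using v by simp
  qed
  have "dl ` P4 \<subseteq> (FS4 :: ((nat \<Rightarrow> nat) \<Rightarrow> 'a) set)"
    unfolding FS4_def P4_def dl_def by (auto split: if_splits)
  then have "(dl :: _ \<Rightarrow> _ \<Rightarrow> 'a) ` P4 \<subseteq> FV.span (\<phi> ` W)" using FS unfolding S_def by blast
  then have "card ((dl :: _ \<Rightarrow> _ \<Rightarrow> 'a) ` P4) \<le> card (\<phi> ` W)"
    using FV.independent_span_bound[OF finite_imageI[OF fin] dl_indep] by blast
  also have "\<dots> \<le> card W" by (rule card_image_le[OF fin])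
  finally show False using card card_dl[where 'a='a] by linarith
qed

lemma big_False:
  fixes w :: "'i \<Rightarrow> tree \<Rightarrow> 'a" and k :: "'i \<Rightarrow> tree \<Rightarrow> 'a"
  assumes fin: "finite I" and card: "card I > 24" and wT: "\<And>i. i \<in> I \<Longrightarrow> w i \<in> T4"
    and kJ: "\<And>i v. i \<in> I \<Longrightarrow> v \<in> J \<Longrightarrow> Lin (k i) v = 0"
    and kw: "\<And>i j. i \<in> I \<Longrightarrow> j \<in> I \<Longrightarrow> Lin (k i) (w j) = (if i = j then 1 else 0)"
  shows False
proof -
  have inj: "inj_on (\<lambda>i. \<phi> (w i)) I"
  proof (rule inj_onI)
    fix i j assume ij: "i \<in> I" "j \<in> I" "\<phi> (w i) = \<phi> (w j)"
    have "w i - w j \<in> T4" using FV.subspace_diff[OF T4_subspace wT[OF ij(1)] wT[OF ij(2)]] .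
    moreover have "\<phi> (w i - w j) = 0" by (simp only: phi_diff[OF wT[OF ij(1)] wT[OF ij(2)]] ij(3) diff_self)
    ultimately have "w i - w j \<in> J" using ker by blast
    then have "Lin (k i) (w i - w j) = 0" using kJ ij by blast
    then show "i = j" using kw[OF ij(1) ij(1)] kw[OF ij(1) ij(2)] by (auto split: if_splits)
  qed
  define B where "B = (\<lambda>i. \<phi> (w i)) ` I"
  have cardB: "card B = card I" unfolding B_def using card_image[OF inj] .
  have finB: "finite B" unfolding B_def using fin by simp
  have indep: "FV.independent B"
    unfolding FV.dependent_finite[OF finB]
  proof
    assume "\<exists>c. (\<exists>v\<in>B. c v \<noteq> 0) \<and> (\<Sum>v\<in>B. sc (c v) v) = 0"
    then obtain c b where b: "b \<in> B" "c b \<noteq> 0" and s: "(\<Sum>v\<in>B. sc (c v) v) = 0" by blast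
    from b obtain j where j: "j \<in> I" "b = \<phi> (w j)" unfolding B_def by blast
    define v where "v = (\<Sum>i\<in>I. sc (c (\<phi> (w i))) (w i))"
    have vT: "v \<in> T4" unfolding v_def using wT
      by (intro FV.subspace_sum[OF T4_subspace] FV.subspace_scale[OF T4_subspace]) auto
    have "\<phi> v = (\<Sum>i\<in>I. sc (c (\<phi> (w i))) (\<phi> (w i)))" unfolding v_def by (rule phi_lin[OF fin wT])
    also have "\<dots> = (\<Sum>v\<in>B. sc (c v) v)" unfolding B_def by (simp add: sum.reindex[OF inj] o_def)
    finally have "\<phi> v = 0" using s by simp
    then have "v \<in> J" using ker vT by blast
    then have "Lin (k j) v = 0" using kJ j by blast
    moreover have "Lin (k j) v = (\<Sum>i\<in>I. c (\<phi> (w i)) * (if j = i then 1 else 0))"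
      unfolding v_def Lin_sum[OF fin] Lin_sc using kw[OF j(1)] by (intro sum.cong) auto
    moreover have "\<dots> = c b" using j fin by (simp add: if_distrib cong: if_cong)
    ultimately show False using b by simp
  qed
  have "B \<subseteq> FS4" unfolding B_def using img wT by blast
  then have "B \<subseteq> FV.span ((dl :: _ \<Rightarrow> _ \<Rightarrow> 'a) ` P4)" using FS4_span by blast
  then have "card B \<le> card ((dl :: _ \<Rightarrow> _ \<Rightarrow> 'a) ` P4)"
    using FV.independent_span_bound[OF finite_imageI[OF finite_P4] indep] by blast
  then show False using cardB card card_dl[where 'a='a] by linarith
qed

end

lemma reg_regmap:
  assumes "regular_arity4 x1 x2 x3 x4 x5 x6"
  obtains \<phi> :: "(tree \<Rightarrow> 'a::field) \<Rightarrow> ((nat \<Rightarrow> nat) \<Rightarrow> 'a)" where "regmap \<phi> (J4 x1 x2 x3 x4 x5 x6)"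
proof -
  from assms obtain \<phi> :: "(tree \<Rightarrow> 'a) \<Rightarrow> ((nat \<Rightarrow> nat) \<Rightarrow> 'a)" where
    a: "\<forall>u\<in>T4. \<forall>v\<in>T4. \<phi> (\<lambda>t. u t + v t) = (\<lambda>\<tau>. \<phi> u \<tau> + \<phi> v \<tau>)"
    and b: "\<forall>u\<in>T4. \<forall>c. \<phi> (\<lambda>t. c * u t) = (\<lambda>\<tau>. c * \<phi> u \<tau>)"
    and c: "\<phi> ` T4 = FS4"
    and d: "{v\<in>T4. \<phi> v = (\<lambda>_. 0)} = J4 x1 x2 x3 x4 x5 x6"
    unfolding regular_arity4_def by blast
  have "regmap \<phi> (J4 x1 x2 x3 x4 x5 x6)"
  proof
    show "\<phi> (u + v) = \<phi> u + \<phi> v" if "u \<in> T4" "v \<in> T4" for u v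
      using a that unfolding plus_fun_def by blast
    show "\<phi> (sc c u) = sc c (\<phi> u)" if "u \<in> T4" for u c
      using b that unfolding sc_def by blast
    show "\<phi> ` T4 = FS4" by (rule c)
    show "{v\<in>T4. \<phi> v = 0} = J4 x1 x2 x3 x4 x5 x6" using d unfolding zero_fun_def .
  qed
  then show ?thesis using that by blast
qed


definition Kf :: "(tree \<Rightarrow> nat list) \<Rightarrow> (tree \<Rightarrow> 'a) \<Rightarrow> (nat \<Rightarrow> nat) \<Rightarrow> tree \<Rightarrow> 'a::field" where
  "Kf nfw nfc \<tau> t = (if nfw t = word \<tau> then nfc t else 0)"
definition s5l :: "nat list \<Rightarrow> tree" where "s5l w = S5 (w!0) (w!1) (w!2) (w!3)"

lemma s5l_inj: "length w = 4 \<Longrightarrow> length w' = 4 \<Longrightarrow> s5l w = s5l w' \<Longrightarrow> w = w'"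
  using len4_list[of w] len4_list[of w'] by (auto simp: s5l_def)

lemma s5l_basis: "\<tau> \<in> P4 \<Longrightarrow> s5l (word \<tau>) \<in> basis4"
  using word_lab[of \<tau>] unfolding P4_def basis4_def s5l_def word_def by simp

lemma len_lab: "distinct (w::nat list) \<Longrightarrow> set w = {1..4} \<Longrightarrow> length w = 4"
  using distinct_card[of w] by simp

lemma map_inv_iff: assumes "\<sigma> permutes {1..4}" shows "map \<sigma> X = Y \<longleftrightarrow> X = map (inv \<sigma>) Y"
proof
  assume "map \<sigma> X = Y"
  then have "Y = map \<sigma> X" ..
  then have "map (inv \<sigma>) Y = map (inv \<sigma> \<circ> \<sigma>) X" by (simp only: map_map)
  then show "X = map (inv \<sigma>) Y" by (simp only: permutes_inv_o[OF assms] list.map_id)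
next
  assume "X = map (inv \<sigma>) Y"
  then have "map \<sigma> X = map (\<sigma> \<circ> inv \<sigma>) Y" by (simp only: map_map)
  then show "map \<sigma> X = Y" by (simp only: permutes_inv_o[OF assms] list.map_id)
qed

lemma Lin_add': "Lin k (\<lambda>t. p t + v t) = Lin k p + Lin k v"
  by (simp add: Lin_def algebra_simps sum.distrib)
lemma Lin_sc': "Lin k (\<lambda>t. c * p t) = c * Lin k p"
  by (simp add: Lin_def algebra_simps sum_distrib_left)

lemma regular_from_nf:
  fixes nfc :: "tree \<Rightarrow> 'a::field" and nfw :: "tree \<Rightarrow> nat list"
  assumes rel: "\<And>\<sigma> t. \<sigma> permutes {1..4} \<Longrightarrow> t \<in> basis4 \<Longrightarrow> nfw (relabel \<sigma> t) = map \<sigma> (nfw t) \<and> nfc (relabel \<sigma> t) = nfc t"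
  and wok: "\<And>t. t \<in> basis4 \<Longrightarrow> distinct (nfw t) \<and> set (nfw t) = {1..4}"
  and s5: "\<And>\<tau>. \<tau> \<in> P4 \<Longrightarrow> nfw (s5l (word \<tau>)) = word \<tau> \<and> nfc (s5l (word \<tau>)) = 1"
  and gens: "\<And>g \<tau>. g \<in> J4gens x1 x2 x3 x4 x5 x6 \<Longrightarrow> \<tau> \<in> P4 \<Longrightarrow> Lin (Kf nfw nfc \<tau>) g = 0"
  and red: "\<And>t. t \<in> basis4 \<Longrightarrow> unitv t - sc (nfc t) (unitv (s5l (nfw t))) \<in> J4 x1 x2 x3 x4 x5 x6"
  shows "regular_arity4 x1 x2 x3 x4 x5 x6"
proof -
  define \<phi> where "\<phi> v = (\<lambda>\<tau>. if \<tau> \<in> P4 then Lin (Kf nfw nfc \<tau>) v else 0)" for v :: "tree \<Rightarrow> 'a"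
  have A: "\<forall>p\<in>T4. \<forall>v\<in>T4. \<phi> (\<lambda>t. p t + v t) = (\<lambda>\<tau>. \<phi> p \<tau> + \<phi> v \<tau>)"
  proof (intro ballI)
    fix p v :: "tree \<Rightarrow> 'a"
    show "\<phi> (\<lambda>t. p t + v t) = (\<lambda>\<tau>. \<phi> p \<tau> + \<phi> v \<tau>)" unfolding \<phi>_def by (simp add: fun_eq_iff Lin_add')
  qed
  have B: "\<forall>p\<in>T4. \<forall>c. \<phi> (\<lambda>t. c * p t) = (\<lambda>\<tau>. c * \<phi> p \<tau>)"
  proof (intro ballI allI)
    fix p :: "tree \<Rightarrow> 'a" and c
    show "\<phi> (\<lambda>t. c * p t) = (\<lambda>\<tau>. c * \<phi> p \<tau>)" unfolding \<phi>_def by (simp add: fun_eq_iff Lin_sc')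
  qed
  have C: "\<phi> ` T4 = FS4"
  proof
    show "\<phi> ` T4 \<subseteq> FS4" unfolding \<phi>_def FS4_def P4_def by (auto split: if_splits)
    show "FS4 \<subseteq> \<phi> ` T4"
    proof
      fix f :: "(nat \<Rightarrow> nat) \<Rightarrow> 'a" assume f: "f \<in> FS4"
      define v where "v = (\<Sum>\<tau>\<in>P4. sc (f \<tau>) (unitv (s5l (word \<tau>)) :: tree \<Rightarrow> 'a))"
      have vT: "v \<in> T4" unfolding v_def
        by (intro FV.subspace_sum[OF T4_subspace] FV.subspace_scale[OF T4_subspace] u_T4 s5l_basis)
      have "\<phi> v = f"
      proof
        fix \<rho>
        show "\<phi> v \<rho> = f \<rho>"
        proof (cases "\<rho> \<in> P4")
          case True
          have "Lin (Kf nfw nfc \<rho>) v = (\<Sum>\<tau>\<in>P4. f \<tau> * Kf nfw nfc \<rho> (s5l (word \<tau>)))"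
            unfolding v_def by (simp add: Lin_sum finite_P4 s5l_basis)
          also have "\<dots> = (\<Sum>\<tau>\<in>P4. if \<tau> = \<rho> then f \<rho> else 0)"
            using word_inj[OF _ True] by (intro sum.cong refl) (auto simp: Kf_def s5 True)
          also have "\<dots> = f \<rho>" using True finite_P4 by simp
          finally show ?thesis using True unfolding \<phi>_def by simp
        next
          case False
          then show ?thesis using f unfolding \<phi>_def FS4_def P4_def by auto
        qed
      qed
      then show "f \<in> \<phi> ` T4" using vT by blast
    qed
  qed
  have D: "\<forall>\<sigma>. \<sigma> permutes {1..4} \<longrightarrow> (\<forall>v\<in>T4. \<phi> (actT \<sigma> v) = actS \<sigma> (\<phi> v))"
  proof (intro allI impI ballI)
    fix \<sigma> :: "nat \<Rightarrow> nat" and v :: "tree \<Rightarrow> 'a" assume p: "\<sigma> permutes {1..4}" and v: "v \<in> T4"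
    show "\<phi> (actT \<sigma> v) = actS \<sigma> (\<phi> v)"
    proof
      fix \<tau>
      have iff: "\<tau> \<in> P4 \<longleftrightarrow> inv \<sigma> \<circ> \<tau> \<in> P4"
      proof
        assume "\<tau> \<in> P4" then show "inv \<sigma> \<circ> \<tau> \<in> P4"
          unfolding P4_def using permutes_compose permutes_inv[OF p] by blast
      next
        assume "inv \<sigma> \<circ> \<tau> \<in> P4"
        then have "\<sigma> \<circ> (inv \<sigma> \<circ> \<tau>) \<in> P4" unfolding P4_def using permutes_compose p by blast
        then show "\<tau> \<in> P4" by (simp add: o_assoc permutes_inv_o[OF p])
      qed
      show "\<phi> (actT \<sigma> v) \<tau> = actS \<sigma> (\<phi> v) \<tau>"
      proof (cases "\<tau> \<in> P4")
        case True
        have "Lin (Kf nfw nfc \<tau>) (actT \<sigma> v) = (\<Sum>t\<in>basis4. v (relabel (inv \<sigma>) t) * Kf nfw nfc \<tau> t)"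
          unfolding Lin_def actT_def ..
        also have "\<dots> = (\<Sum>t\<in>basis4. v (relabel (inv \<sigma>) (relabel \<sigma> t)) * Kf nfw nfc \<tau> (relabel \<sigma> t))"
          by (rule sum.reindex_bij_betw[OF relabel_bij[OF p], symmetric])
        also have "\<dots> = (\<Sum>t\<in>basis4. v t * Kf nfw nfc (inv \<sigma> \<circ> \<tau>) t)"
        proof (intro sum.cong refl)
          fix t assume t: "t \<in> basis4"
          have "relabel (inv \<sigma>) (relabel \<sigma> t) = t" by (simp add: relabel_comp permutes_inv_o[OF p] relabel_id)
          moreover have "Kf nfw nfc \<tau> (relabel \<sigma> t) = Kf nfw nfc (inv \<sigma> \<circ> \<tau>) t"
            unfolding Kf_def using rel[OF p t] map_inv_iff[OF p] by (simp add: word_map)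
          ultimately show "v (relabel (inv \<sigma>) (relabel \<sigma> t)) * Kf nfw nfc \<tau> (relabel \<sigma> t) = v t * Kf nfw nfc (inv \<sigma> \<circ> \<tau>) t"
            by simp
        qed
        finally show ?thesis using True iff unfolding \<phi>_def actS_def Lin_def by simp
      next
        case False
        then show ?thesis using iff unfolding \<phi>_def actS_def by simp
      qed
    qed
  qed
  have E: "{v\<in>T4. \<phi> v = (\<lambda>_. 0)} = J4 x1 x2 x3 x4 x5 x6"
  proof
    show "J4 x1 x2 x3 x4 x5 x6 \<subseteq> {v\<in>T4. \<phi> v = (\<lambda>_. 0)}"
    proof
      fix v assume v: "v \<in> J4 x1 x2 x3 x4 x5 x6"
      have "Lin (Kf nfw nfc \<tau>) v = 0" if "\<tau> \<in> P4" for \<tau>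
        using Lin_span0[of "J4gens x1 x2 x3 x4 x5 x6" "Kf nfw nfc \<tau>" v] gens that v unfolding J4_span by blast
      then have "\<phi> v = (\<lambda>_. 0)" unfolding \<phi>_def by auto
      then show "v \<in> {v\<in>T4. \<phi> v = (\<lambda>_. 0)}" using J4_T4 v by blast
    qed
    show "{v\<in>T4. \<phi> v = (\<lambda>_. 0)} \<subseteq> J4 x1 x2 x3 x4 x5 x6"
    proof
      fix v assume "v \<in> {v\<in>T4. \<phi> v = (\<lambda>_. 0)}"
      then have vT: "v \<in> T4" and v0: "\<phi> v = (\<lambda>_. 0)" by auto
      define R where "R t = sc (nfc t) (unitv (s5l (nfw t)) :: tree \<Rightarrow> 'a)" for t
      have R0: "(\<Sum>t\<in>basis4. v t * R t x) = 0" for x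
      proof (cases "\<exists>\<tau>\<in>P4. x = s5l (word \<tau>)")
        case True
        then obtain \<tau> where \<tau>: "\<tau> \<in> P4" "x = s5l (word \<tau>)" by blast
        have "(\<Sum>t\<in>basis4. v t * R t x) = (\<Sum>t\<in>basis4. v t * Kf nfw nfc \<tau> t)"
        proof (intro sum.cong refl)
          fix t assume t: "t \<in> basis4"
          have l1: "length (nfw t) = 4" using wok[OF t] len_lab by blast
          have l2: "length (word \<tau>) = 4" by (simp add: word_def)
          have e: "s5l (word \<tau>) = s5l (nfw t) \<longleftrightarrow> nfw t = word \<tau>" using s5l_inj[OF l1 l2] by auto
          show "v t * R t x = v t * Kf nfw nfc \<tau> t"
            unfolding R_def Kf_def unitv_def \<tau>(2) sc_apply e by simp
        qed
        also have "\<dots> = \<phi> v \<tau>" unfolding \<phi>_def Lin_def using \<tau> by simp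
        finally show ?thesis using v0 by simp
      next
        case False
        have "R t x = 0" if t: "t \<in> basis4" for t
        proof -
          have "pw (nfw t) \<in> P4" unfolding P4_def using pw_perm wok[OF t] by blast
          moreover have "word (pw (nfw t)) = nfw t" using word_pw wok[OF t] len_lab by blast
          ultimately have "x \<noteq> s5l (nfw t)" using False by metis
          then show ?thesis unfolding R_def unitv_def by simp
        qed
        then show ?thesis by simp
      qed
      have "v = (\<Sum>t\<in>basis4. sc (v t) (unitv t - R t))"
      proof
        fix x
        have "(\<Sum>t\<in>basis4. sc (v t) (unitv t - R t)) x = (\<Sum>t\<in>basis4. sc (v t) (unitv t)) x - (\<Sum>t\<in>basis4. v t * R t x)"
          by (simp add: sum_fun_apply finite_basis4 algebra_simps sum_subtractf)
        also have "\<dots> = v x" using R0 T4_decomp[OF vT] by simp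
        finally show "v x = (\<Sum>t\<in>basis4. sc (v t) (unitv t - R t)) x" by simp
      qed
      also have "\<dots> \<in> J4 x1 x2 x3 x4 x5 x6" unfolding J4_span
        using red[unfolded J4_span] unfolding R_def by (intro FV.span_sum FV.span_scale) auto
      finally show "v \<in> J4 x1 x2 x3 x4 x5 x6" .
    qed
  qed
  show ?thesis unfolding regular_arity4_def using A B C D E by blast
qed


lemma Jc: "p \<in> J4 x1 x2 x3 x4 x5 x6 \<Longrightarrow> q \<in> J4 x1 x2 x3 x4 x5 x6 \<Longrightarrow> v = p + sc c q \<Longrightarrow> v \<in> J4 x1 x2 x3 x4 x5 x6"
  unfolding J4_span using FV.span_add FV.span_scale by blast
lemma Jsc: "p \<in> J4 x1 x2 x3 x4 x5 x6 \<Longrightarrow> v = sc c p \<Longrightarrow> v \<in> J4 x1 x2 x3 x4 x5 x6"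
  unfolding J4_span using FV.span_scale by blast
lemma J0: "0 \<in> J4 x1 x2 x3 x4 x5 x6"
  unfolding J4_span using FV.span_zero by blast

definition RD :: "(tree \<Rightarrow> 'a::field) set \<Rightarrow> (tree \<Rightarrow> 'a) set \<Rightarrow> tree \<Rightarrow> bool" where
  "RD W J t \<longleftrightarrow> (\<exists>w\<in>FV.span W. unitv t - w \<in> J)"

lemma RD_chain:
  assumes "RD W (J4 x1 x2 x3 x4 x5 x6) t1" "unitv t - sc c (unitv t1) \<in> J4 x1 x2 x3 x4 x5 x6"
  shows "RD W (J4 x1 x2 x3 x4 x5 x6) t"
proof -
  from assms(1) obtain w1 where w1: "w1 \<in> FV.span W" "unitv t1 - w1 \<in> J4 x1 x2 x3 x4 x5 x6" unfolding RD_def by blast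
  have "unitv t - sc c w1 \<in> J4 x1 x2 x3 x4 x5 x6"
    by (rule Jc[OF assms(2) w1(2), where c=c]) (simp add: fun_eq_iff algebra_simps)
  moreover have "sc c w1 \<in> FV.span W" using FV.span_scale w1(1) by blast
  ultimately show ?thesis unfolding RD_def by blast
qed

lemma RD_base: "w \<in> W \<Longrightarrow> unitv t - sc c w \<in> J \<Longrightarrow> RD W J t"
  unfolding RD_def using FV.span_scale FV.span_base by blast

lemma RD_self: "unitv t \<in> W \<Longrightarrow> RD W (J4 x1 x2 x3 x4 x5 x6) t"
  by (rule RD_base[of "unitv t" _ _ 1]) (auto simp: J0 fun_eq_iff)

lemma RD_J: "unitv t \<in> J \<Longrightarrow> RD W J t"
  unfolding RD_def using FV.span_zero[of W] by (metis diff_zero)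

lemma not_reg_small:
  fixes W :: "(tree \<Rightarrow> 'a::field) set"
  assumes "finite W" "W \<subseteq> T4" "card W < 24"
    and r1: "\<And>a b c d. lab a b c d \<Longrightarrow> RD W (J4 x1 x2 x3 x4 x5 x6) (S1 a b c d)"
    and r2: "\<And>a b c d. lab a b c d \<Longrightarrow> RD W (J4 x1 x2 x3 x4 x5 x6) (S2 a b c d)"
    and r3: "\<And>a b c d. lab a b c d \<Longrightarrow> RD W (J4 x1 x2 x3 x4 x5 x6) (S3 a b c d)"
    and r4: "\<And>a b c d. lab a b c d \<Longrightarrow> RD W (J4 x1 x2 x3 x4 x5 x6) (S4 a b c d)"
    and r5: "\<And>a b c d. lab a b c d \<Longrightarrow> RD W (J4 x1 x2 x3 x4 x5 x6) (S5 a b c d)"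
  shows "\<not> regular_arity4 x1 x2 x3 x4 x5 x6"
proof
  assume "regular_arity4 x1 x2 x3 x4 x5 x6"
  then obtain \<phi> :: "(tree \<Rightarrow> 'a) \<Rightarrow> ((nat \<Rightarrow> nat) \<Rightarrow> 'a)" where "regmap \<phi> (J4 x1 x2 x3 x4 x5 x6)"
    by (rule reg_regmap)
  then interpret regmap \<phi> "J4 x1 x2 x3 x4 x5 x6" .
  show False
  proof (rule small_False[OF assms(1-3)])
    fix t assume "t \<in> basis4"
    then obtain a b c d where "lab a b c d" "t = S1 a b c d \<or> t = S2 a b c d \<or> t = S3 a b c d \<or> t = S4 a b c d \<or> t = S5 a b c d"
      unfolding basis4_iff by blast
    then have "RD W (J4 x1 x2 x3 x4 x5 x6) t" using r1 r2 r3 r4 r5 by blast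
    then show "\<exists>w\<in>FV.span W. unitv t - w \<in> J4 x1 x2 x3 x4 x5 x6" unfolding RD_def .
  qed
qed

lemma not_reg_big:
  fixes w :: "'i \<Rightarrow> tree \<Rightarrow> 'a::field" and k :: "'i \<Rightarrow> tree \<Rightarrow> 'a"
  assumes fin: "finite I" and card: "card I > 24" and wT: "\<And>i. i \<in> I \<Longrightarrow> w i \<in> T4"
    and kJ: "\<And>i g. i \<in> I \<Longrightarrow> g \<in> J4gens x1 x2 x3 x4 x5 x6 \<Longrightarrow> Lin (k i) g = 0"
    and kw: "\<And>i j. i \<in> I \<Longrightarrow> j \<in> I \<Longrightarrow> Lin (k i) (w j) = (if i = j then 1 else 0)"
  shows "\<not> regular_arity4 x1 x2 x3 x4 x5 x6"
proof
  assume "regular_arity4 x1 x2 x3 x4 x5 x6"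
  then obtain \<phi> :: "(tree \<Rightarrow> 'a) \<Rightarrow> ((nat \<Rightarrow> nat) \<Rightarrow> 'a)" where "regmap \<phi> (J4 x1 x2 x3 x4 x5 x6)"
    by (rule reg_regmap)
  then interpret regmap \<phi> "J4 x1 x2 x3 x4 x5 x6" .
  show False
  proof (rule big_False[OF fin card wT _ kw])
    fix i v assume "i \<in> I" "v \<in> J4 x1 x2 x3 x4 x5 x6"
    then show "Lin (k i) v = 0" using Lin_span0[of "J4gens x1 x2 x3 x4 x5 x6" "k i" v] kJ unfolding J4_span by blast
  qed auto
qed

definition L24 :: "(nat \<times> nat \<times> nat \<times> nat) set" where "L24 = {(a,b,c,d). lab a b c d}"

lemma card_L24: "card L24 = 24" and finite_L24: "finite L24"
proof -
  have "bij_betw (\<lambda>\<tau>. (\<tau> 1, \<tau> 2, \<tau> 3, \<tau> 4)) P4 L24"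
  proof (rule bij_betwI')
    fix x y assume "x \<in> P4" "y \<in> P4"
    then show "((x 1, x 2, x 3, x 4) = (y 1, y 2, y 3, y 4)) = (x = y)"
      using word_inj[of x y] unfolding word_def by (metis list.inject prod.inject)
  next
    fix x assume "x \<in> P4"
    then show "(x 1, x 2, x 3, x 4) \<in> L24" using word_lab[of x] unfolding P4_def L24_def lab_def word_def by simp
  next
    fix y assume "y \<in> L24"
    then obtain a b c d where y: "y = (a,b,c,d)" "lab a b c d" unfolding L24_def by auto
    then have "pw [a,b,c,d] \<in> P4" "word (pw [a,b,c,d]) = [a,b,c,d]"
      unfolding P4_def using pw_perm[of "[a,b,c,d]"] word_pw[of "[a,b,c,d]"] unfolding lab_def by auto
    then show "\<exists>x\<in>P4. y = (x 1, x 2, x 3, x 4)" using y unfolding word_def by (intro bexI[of _ "pw [a,b,c,d]"]) auto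
  qed
  then have b: "bij_betw (\<lambda>\<tau>. (\<tau> 1, \<tau> 2, \<tau> 3, \<tau> 4)) P4 L24" .
  show "card L24 = 24" using bij_betw_same_card[OF b] card_P4 by simp
  show "finite L24" using bij_betw_finite[OF b] finite_P4 by simp
qed

lemma card_img_lt: assumes "L \<subseteq> L24" "p \<in> L24" "p \<notin> L" shows "card (f ` L) < 24"
proof -
  have "card L < card L24" using assms finite_L24 by (intro psubset_card_mono) auto
  then show ?thesis using card_image_le[OF finite_subset[OF assms(1) finite_L24], of f] card_L24 by linarith
qed

lemma finite_img: "L \<subseteq> L24 \<Longrightarrow> finite (f ` L)"
  using finite_L24 finite_subset by blast


lemma basis_lab[simp]:
  "S1 a b c d \<in> basis4 \<longleftrightarrow> lab a b c d" "S2 a b c d \<in> basis4 \<longleftrightarrow> lab a b c d"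
  "S3 a b c d \<in> basis4 \<longleftrightarrow> lab a b c d" "S4 a b c d \<in> basis4 \<longleftrightarrow> lab a b c d"
  "S5 a b c d \<in> basis4 \<longleftrightarrow> lab a b c d"
  by (simp_all add: basis4_def lab_def)

lemma labD: "lab a b c d \<Longrightarrow> distinct [a,b,c,d] \<and> set [a,b,c,d] = {1..4}"
  by (simp add: lab_def)

lemma labE: "lab a b c d \<Longrightarrow> a \<noteq> b \<and> a \<noteq> c \<and> a \<noteq> d \<and> b \<noteq> c \<and> b \<noteq> d \<and> c \<noteq> d
  \<and> b \<noteq> a \<and> c \<noteq> a \<and> d \<noteq> a \<and> c \<noteq> b \<and> d \<noteq> b \<and> d \<noteq> c
  \<and> Suc 0 \<le> a \<and> a \<le> 4 \<and> Suc 0 \<le> b \<and> b \<le> 4 \<and> Suc 0 \<le> c \<and> c \<le> 4 \<and> Suc 0 \<le> d \<and> d \<le> 4"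
  by (auto simp: lab_iff)

lemma F5rel: assumes l: "lab a b c d" shows
  "u (S1 a b c d) - sc s (u (S2 c a b d)) \<in> J4 0 0 0 0 s 0"
  "u (S4 a b c d) - sc s (u (S5 a d b c)) \<in> J4 0 0 0 0 s 0"
  "u (S1 a b c d) - sc s (u (S4 d a b c)) \<in> J4 0 0 0 0 s 0"
  "u (S2 a b c d) - sc s (u (S5 d a b c)) \<in> J4 0 0 0 0 s 0"
  "u (S3 a b c d) - sc s (u (S3 c d a b)) \<in> J4 0 0 0 0 s 0"
proof -
  have l2: "lab b c d a" using l by (simp add: lab_iff)
  show "u (S1 a b c d) - sc s (u (S2 c a b d)) \<in> J4 0 0 0 0 s 0"
    using G1[of a b c d 0 0 0 0 s 0, OF l] by (simp add: E1_def)
  show "u (S4 a b c d) - sc s (u (S5 a d b c)) \<in> J4 0 0 0 0 s 0"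
    using G2[of b c d a 0 0 0 0 s 0, OF l2] by (simp add: E2_def)
  show "u (S1 a b c d) - sc s (u (S4 d a b c)) \<in> J4 0 0 0 0 s 0"
    using G3[of a b c d 0 0 0 0 s 0, OF l] by (simp add: E3_def)
  show "u (S2 a b c d) - sc s (u (S5 d a b c)) \<in> J4 0 0 0 0 s 0"
    using G4[of a b c d 0 0 0 0 s 0, OF l] by (simp add: E4_def)
  show "u (S3 a b c d) - sc s (u (S3 c d a b)) \<in> J4 0 0 0 0 s 0"
    using G5[of a b c d 0 0 0 0 s 0, OF l] by (simp add: E5_def)
qed

fun nfw5 :: "tree \<Rightarrow> nat list" where
  "nfw5 (Node (Node (Node (Leaf a) (Leaf b)) (Leaf c)) (Leaf d)) = [d,c,a,b]"
| "nfw5 (Node (Node (Leaf a) (Node (Leaf b) (Leaf c))) (Leaf d)) = [d,a,b,c]"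
| "nfw5 (Node (Node (Leaf a) (Leaf b)) (Node (Leaf c) (Leaf d))) = [a,b,c,d]"
| "nfw5 (Node (Leaf a) (Node (Node (Leaf b) (Leaf c)) (Leaf d))) = [a,d,b,c]"
| "nfw5 (Node (Leaf a) (Node (Leaf b) (Node (Leaf c) (Leaf d)))) = [a,b,c,d]"
| "nfw5 _ = []"

fun nfc5 :: "'a::field \<Rightarrow> tree \<Rightarrow> 'a" where
  "nfc5 s (Node (Node (Node (Leaf a) (Leaf b)) (Leaf c)) (Leaf d)) = s * s"
| "nfc5 s (Node (Node (Leaf a) (Node (Leaf b) (Leaf c))) (Leaf d)) = s"
| "nfc5 s (Node (Node (Leaf a) (Leaf b)) (Node (Leaf c) (Leaf d))) = 0"
| "nfc5 s (Node (Leaf a) (Node (Node (Leaf b) (Leaf c)) (Leaf d))) = s"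
| "nfc5 s (Node (Leaf a) (Node (Leaf b) (Node (Leaf c) (Leaf d)))) = 1"
| "nfc5 s _ = 0"

lemma gens5: assumes "g \<in> J4gens 0 0 0 0 s 0"
  shows "Lin (Kf nfw5 (nfc5 s) \<tau>) g = 0"
proof -
  from assms obtain a b c d where l: "lab a b c d" and g: "g = E1 0 0 0 0 s 0 a b c d \<or> g = E2 0 0 0 0 s 0 a b c d
    \<or> g = E3 0 0 0 0 s 0 a b c d \<or> g = E4 0 0 0 0 s 0 a b c d \<or> g = E5 0 0 0 0 s 0 a b c d"
    by (rule J4gens_cases)
  note l' = labE[OF l]
  from g show ?thesis
    by (elim disjE) (simp_all add: E1_def E2_def E3_def E4_def E5_def Kf_def lab_iff l')
qed

lemma shape_cases:
  assumes "t \<in> basis4"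
  obtains a b c d where "lab a b c d" "t = S1 a b c d" | a b c d where "lab a b c d" "t = S2 a b c d"
   | a b c d where "lab a b c d" "t = S3 a b c d" | a b c d where "lab a b c d" "t = S4 a b c d"
   | a b c d where "lab a b c d" "t = S5 a b c d"
  using assms unfolding basis4_iff by blast

lemma nf5_rel: "\<sigma> permutes {1..4} \<Longrightarrow> t \<in> basis4 \<Longrightarrow> nfw5 (relabel \<sigma> t) = map \<sigma> (nfw5 t) \<and> nfc5 s (relabel \<sigma> t) = nfc5 s t"
  by (erule shape_cases) simp_all

lemma labP: "lab a b c d \<Longrightarrow> lab a b c d \<and> lab a b d c \<and> lab a c b d \<and> lab a c d b \<and> lab a d b c \<and> lab a d c b \<and> lab b a c d \<and> lab b a d c \<and> lab b c a d \<and> lab b c d a \<and> lab b d a c \<and> lab b d c a \<and> lab c a b d \<and> lab c a d b \<and> lab c b a d \<and> lab c b d a \<and> lab c d a b \<and> lab c d b a \<and> lab d a b c \<and> lab d a c b \<and> lab d b a c \<and> lab d b c a \<and> lab d c a b \<and> lab d c b a"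
  unfolding lab_iff by auto

lemma nf5_wok: assumes "t \<in> basis4" shows "distinct (nfw5 t) \<and> set (nfw5 t) = {1..4}"
  using assms
proof (cases rule: shape_cases)
  case (1 a b c d) then show ?thesis using labD[of d c a b] labP[OF 1(1)] by simp
next
  case (2 a b c d) then show ?thesis using labD[of d a b c] labP[OF 2(1)] by simp
next
  case (3 a b c d) then show ?thesis using labD[of a b c d] by simp
next
  case (4 a b c d) then show ?thesis using labD[of a d b c] labP[OF 4(1)] by simp
next
  case (5 a b c d) then show ?thesis using labD[of a b c d] by simp
qed

lemma s5_5: "nfw5 (s5l (word \<tau>)) = word \<tau> \<and> nfc5 s (s5l (word \<tau>)) = 1"
  by (simp add: s5l_def word_def)

lemma red5: assumes s: "s * s \<noteq> 1" and t: "t \<in> basis4"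
  shows "u t - sc (nfc5 s t) (u (s5l (nfw5 t))) \<in> J4 0 0 0 0 s 0"
  using t
proof (cases rule: shape_cases)
  case (1 a b c d)
  have "lab d a b c" using labP[OF 1(1)] by blast
  note e1 = F5rel(3)[OF 1(1), of s] and e2 = F5rel(2)[OF this, of s]
  have "u (S1 a b c d) - sc (s * s) (u (S5 d c a b)) \<in> J4 0 0 0 0 s 0"
    by (rule Jc[OF e1 e2, where c=s]) (simp add: fun_eq_iff algebra_simps)
  then show ?thesis using 1 by (simp add: s5l_def)
next
  case (2 a b c d)
  then show ?thesis using F5rel(4)[OF 2(1)] by (simp add: s5l_def)
next
  case (3 a b c d)
  have ne: "1 - s * s \<noteq> 0" using s by simp
  have "lab c d a b" using labP[OF 3(1)] by blast
  note e1 = F5rel(5)[OF 3(1), of s] and e2 = F5rel(5)[OF this, of s]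
  have e3: "sc (1 - s * s) (u (S3 a b c d)) \<in> J4 0 0 0 0 s 0"
    by (rule Jc[OF e1 e2, where c=s]) (simp add: fun_eq_iff algebra_simps)
  have "u (S3 a b c d) \<in> J4 0 0 0 0 s 0"
    by (rule Jsc[OF e3, where c="inverse (1 - s*s)"]) (use ne in \<open>simp add: fun_eq_iff\<close>)
  then show ?thesis using 3 by (simp add: s5l_def)
next
  case (4 a b c d)
  then show ?thesis using F5rel(2)[OF 4(1)] by (simp add: s5l_def)
next
  case (5 a b c d)
  then show ?thesis using J0 by (simp add: s5l_def)
qed

theorem pos5: assumes "(s::'a::field) * s \<noteq> 1" shows "regular_arity4 0 0 0 0 s 0"
  by (rule regular_from_nf[where nfw=nfw5 and nfc="nfc5 s"])
    (auto simp: nf5_rel nf5_wok s5_5 gens5 red5[OF assms])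

definition kp5 :: "'a::field \<Rightarrow> tree \<Rightarrow> 'a" where
  "kp5 s t = (if t = S3 1 2 3 4 then 1 else if t = S3 3 4 1 2 then s else 0)"

lemma kp5_gens: assumes s: "s * s = 1" and g: "g \<in> J4gens 0 0 0 0 s 0"
  shows "Lin (kp5 s) g = 0"
proof -
  from g obtain a b c d where l: "lab a b c d" and g: "g = E1 0 0 0 0 s 0 a b c d \<or> g = E2 0 0 0 0 s 0 a b c d
    \<or> g = E3 0 0 0 0 s 0 a b c d \<or> g = E4 0 0 0 0 s 0 a b c d \<or> g = E5 0 0 0 0 s 0 a b c d"
    by (rule J4gens_cases)
  note l' = labE[OF l]
  from g show ?thesis
    by (elim disjE) (auto simp: E1_def E2_def E3_def E4_def E5_def kp5_def lab_iff l' s)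
qed

lemma card_I: "card (insert None (Some ` P4)) = 25"
  using card_P4 finite_P4 by (simp add: card_image)

theorem big5: assumes s: "(s::'a::field) * s = 1" shows "\<not> regular_arity4 0 0 0 0 s 0"
proof (rule not_reg_big[where I="insert None (Some ` P4)"
    and w="\<lambda>i. case i of None \<Rightarrow> u (S3 1 2 3 4) | Some \<tau> \<Rightarrow> u (s5l (word \<tau>))"
    and k="\<lambda>i. case i of None \<Rightarrow> kp5 s | Some \<tau> \<Rightarrow> Kf nfw5 (nfc5 s) \<tau>"])
  show "finite (insert None (Some ` P4))" using finite_P4 by simp
  show "24 < card (insert None (Some ` P4))" using card_I by simp
  show "(case i of None \<Rightarrow> u (S3 1 2 3 4) | Some \<tau> \<Rightarrow> u (s5l (word \<tau>))) \<in> T4"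
    if "i \<in> insert None (Some ` P4)" for i
    using that by (auto intro!: u_T4 s5l_basis simp: lab_iff)
  show "Lin (case i of None \<Rightarrow> kp5 s | Some \<tau> \<Rightarrow> Kf nfw5 (nfc5 s) \<tau>) g = 0"
    if "i \<in> insert None (Some ` P4)" "g \<in> J4gens 0 0 0 0 s 0" for i g
    using that kp5_gens[OF s] gens5 by (auto split: option.split)
  show "Lin (case i of None \<Rightarrow> kp5 s | Some \<tau> \<Rightarrow> Kf nfw5 (nfc5 s) \<tau>)
          (case j of None \<Rightarrow> u (S3 1 2 3 4) | Some \<tau> \<Rightarrow> u (s5l (word \<tau>))) = (if i = j then 1 else 0)"
    if "i \<in> insert None (Some ` P4)" "j \<in> insert None (Some ` P4)" for i j
  proof -
    have b: "S3 1 2 3 4 \<in> basis4" by (simp add: lab_iff)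
    show ?thesis
    proof (cases i)
      case None
      then show ?thesis using that b s5l_basis
        by (cases j) (auto simp: kp5_def s5l_def)
    next
      case (Some \<tau>)
      then have \<tau>: "\<tau> \<in> P4" using that by auto
      show ?thesis
      proof (cases j)
        case None
        then show ?thesis using Some b by (simp add: Kf_def)
      next
        case (Some \<tau>')
        then have \<tau>': "\<tau>' \<in> P4" using that by auto
        show ?thesis using \<open>i = Some \<tau>\<close> Some s5l_basis[OF \<tau>'] word_inj[OF \<tau>' \<tau>]
          by (auto simp: Kf_def s5_5)
      qed
    qed
  qed
qed


lemma not_reg_allJ:
  assumes r1: "\<And>a b c d. lab a b c d \<Longrightarrow> u (S1 a b c d) \<in> J4 x1 x2 x3 x4 x5 x6"
    and r2: "\<And>a b c d. lab a b c d \<Longrightarrow> u (S2 a b c d) \<in> J4 x1 x2 x3 x4 x5 x6"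
    and r3: "\<And>a b c d. lab a b c d \<Longrightarrow> u (S3 a b c d) \<in> J4 x1 x2 x3 x4 x5 x6"
    and r4: "\<And>a b c d. lab a b c d \<Longrightarrow> u (S4 a b c d) \<in> J4 x1 x2 x3 x4 x5 x6"
    and r5: "\<And>a b c d. lab a b c d \<Longrightarrow> u (S5 a b c d) \<in> J4 x1 x2 x3 x4 x5 x6"
  shows "\<not> regular_arity4 x1 x2 x3 x4 x5 (x6::'a::field)"
  by (rule not_reg_small[where W="{} :: (tree \<Rightarrow> 'a) set"]) (auto intro: RD_J r1 r2 r3 r4 r5)

lemma F1rel: assumes l: "lab a b c d" shows
  "u (S1 a b c d) - sc s (u (S2 a b c d)) \<in> J4 s 0 0 0 0 0"
  "u (S4 a b c d) - sc s (u (S5 a b c d)) \<in> J4 s 0 0 0 0 0"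
  "u (S1 a b c d) - sc s (u (S3 a b c d)) \<in> J4 s 0 0 0 0 0"
  "u (S2 a b c d) - sc s (u (S4 a b c d)) \<in> J4 s 0 0 0 0 0"
  "u (S3 a b c d) - sc s (u (S5 a b c d)) \<in> J4 s 0 0 0 0 0"
proof -
  have l2: "lab b c d a" using labP[OF l] by blast
  show "u (S1 a b c d) - sc s (u (S2 a b c d)) \<in> J4 s 0 0 0 0 0"
    using G1[of a b c d s 0 0 0 0 0, OF l] by (simp add: E1_def)
  show "u (S4 a b c d) - sc s (u (S5 a b c d)) \<in> J4 s 0 0 0 0 0"
    using G2[of b c d a s 0 0 0 0 0, OF l2] by (simp add: E2_def)
  show "u (S1 a b c d) - sc s (u (S3 a b c d)) \<in> J4 s 0 0 0 0 0"
    using G3[of a b c d s 0 0 0 0 0, OF l] by (simp add: E3_def)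
  show "u (S2 a b c d) - sc s (u (S4 a b c d)) \<in> J4 s 0 0 0 0 0"
    using G4[of a b c d s 0 0 0 0 0, OF l] by (simp add: E4_def)
  show "u (S3 a b c d) - sc s (u (S5 a b c d)) \<in> J4 s 0 0 0 0 0"
    using G5[of a b c d s 0 0 0 0 0, OF l] by (simp add: E5_def)
qed

lemma gens1: assumes "g \<in> J4gens 1 0 0 0 0 0"
  shows "Lin (Kf leaves (\<lambda>_. 1) \<tau>) g = (0::'a::field)"
proof -
  from assms obtain a b c d where l: "lab a b c d" and g: "g = E1 1 0 0 0 0 0 a b c d \<or> g = E2 1 0 0 0 0 0 a b c d
    \<or> g = E3 1 0 0 0 0 0 a b c d \<or> g = E4 1 0 0 0 0 0 a b c d \<or> g = E5 1 0 0 0 0 0 a b c d"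
    by (rule J4gens_cases)
  note l' = labE[OF l]
  from g show ?thesis
    by (elim disjE) (simp_all add: E1_def E2_def E3_def E4_def E5_def Kf_def lab_iff l')
qed

lemma red1: assumes t: "t \<in> basis4"
  shows "u t - u (s5l (leaves t)) \<in> J4 1 0 0 0 0 (0::'a::field)"
  using t
proof (cases rule: shape_cases)
  case (1 a b c d)
  note r = F1rel[OF 1(1), of 1]
  have e: "u (S1 a b c d) - sc 1 (u (S4 a b c d)) \<in> J4 1 0 0 0 0 (0::'a)"
    by (rule Jc[OF r(1) r(4), where c=1]) (simp add: fun_eq_iff)
  have "u (S1 a b c d) - sc 1 (u (S5 a b c d)) \<in> J4 1 0 0 0 0 (0::'a)"
    by (rule Jc[OF e r(2), where c=1]) (simp add: fun_eq_iff)
  then show ?thesis using 1 by (simp add: s5l_def)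
next
  case (2 a b c d)
  note r = F1rel[OF 2(1), of 1]
  have "u (S2 a b c d) - sc 1 (u (S5 a b c d)) \<in> J4 1 0 0 0 0 (0::'a)"
    by (rule Jc[OF r(4) r(2), where c=1]) (simp add: fun_eq_iff)
  then show ?thesis using 2 by (simp add: s5l_def)
next
  case (3 a b c d)
  then show ?thesis using F1rel(5)[OF 3(1), of 1] by (simp add: s5l_def)
next
  case (4 a b c d)
  then show ?thesis using F1rel(2)[OF 4(1), of 1] by (simp add: s5l_def)
next
  case (5 a b c d)
  then show ?thesis using J0 by (simp add: s5l_def)
qed

theorem pos1: "regular_arity4 1 0 0 0 0 (0::'a::field)"
proof (rule regular_from_nf[where nfw=leaves and nfc="\<lambda>_. 1"])
  show "leaves (relabel \<sigma> t) = map \<sigma> (leaves t) \<and> (1::'a) = 1" for \<sigma> t by (simp add: leaves_relabel)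
  show "distinct (leaves t) \<and> set (leaves t) = {1..4}" if "t \<in> basis4" for t using that by (simp add: basis4_def)
  show "leaves (s5l (word \<tau>)) = word \<tau> \<and> (1::'a) = 1" for \<tau> by (simp add: s5l_def word_def)
qed (auto simp: gens1 red1)

lemma S5J1: assumes s: "s \<noteq> 0" "s \<noteq> 1" and l: "lab a b c d"
  shows "u (S5 a b c d) \<in> J4 s 0 0 0 0 (0::'a::field)"
proof -
  note r = F1rel[OF l, of s]
  have X1: "u (S1 a b c d) - sc (s*s) (u (S4 a b c d)) \<in> J4 s 0 0 0 0 (0::'a)"
    by (rule Jc[OF r(1) r(4), where c=s]) (simp add: fun_eq_iff algebra_simps)
  have X: "u (S1 a b c d) - sc (s*s*s) (u (S5 a b c d)) \<in> J4 s 0 0 0 0 (0::'a)"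
    by (rule Jc[OF X1 r(2), where c="s*s"]) (simp add: fun_eq_iff algebra_simps)
  have Y: "u (S1 a b c d) - sc (s*s) (u (S5 a b c d)) \<in> J4 s 0 0 0 0 (0::'a)"
    by (rule Jc[OF r(3) r(5), where c=s]) (simp add: fun_eq_iff algebra_simps)
  have Z: "sc (s*s*s - s*s) (u (S5 a b c d)) \<in> J4 s 0 0 0 0 (0::'a)"
    by (rule Jc[OF Y X, where c="-1"]) (simp add: fun_eq_iff algebra_simps)
  have ne: "s*s*s - s*s \<noteq> 0" using s by (simp add: algebra_simps)
  show ?thesis by (rule Jsc[OF Z, where c="inverse (s*s*s - s*s)"]) (use ne in \<open>simp add: fun_eq_iff\<close>)
qed

theorem neg1: assumes "(s::'a::field) \<noteq> 0" "s \<noteq> 1" shows "\<not> regular_arity4 s 0 0 0 0 0"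
proof -
  have S5: "u (S5 a b c d) \<in> J4 s 0 0 0 0 (0::'a)" if "lab a b c d" for a b c d using S5J1[OF assms that] .
  have S4: "u (S4 a b c d) \<in> J4 s 0 0 0 0 (0::'a)" if l: "lab a b c d" for a b c d
    by (rule Jc[OF F1rel(2)[OF l] S5[OF l], where c=s]) (simp add: fun_eq_iff)
  have S3: "u (S3 a b c d) \<in> J4 s 0 0 0 0 (0::'a)" if l: "lab a b c d" for a b c d
    by (rule Jc[OF F1rel(5)[OF l] S5[OF l], where c=s]) (simp add: fun_eq_iff)
  have S2: "u (S2 a b c d) \<in> J4 s 0 0 0 0 (0::'a)" if l: "lab a b c d" for a b c d
    by (rule Jc[OF F1rel(4)[OF l] S4[OF l], where c=s]) (simp add: fun_eq_iff)
  have S1: "u (S1 a b c d) \<in> J4 s 0 0 0 0 (0::'a)" if l: "lab a b c d" for a b c d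
    by (rule Jc[OF F1rel(1)[OF l] S2[OF l], where c=s]) (simp add: fun_eq_iff)
  show ?thesis by (rule not_reg_allJ[OF S1 S2 S3 S4 S5])
qed

lemma not_reg_red:
  fixes W :: "(tree \<Rightarrow> 'a::field) set"
  assumes W: "finite W" "W \<subseteq> T4" "card W < 24"
    and r5: "\<And>a b c d. lab a b c d \<Longrightarrow> RD W (J4 x1 x2 x3 x4 x5 x6) (S5 a b c d)"
    and r1: "\<And>a b c d. lab a b c d \<Longrightarrow> \<exists>a' b' c' d' k. lab a' b' c' d' \<and> u (S1 a b c d) - sc k (u (S5 a' b' c' d')) \<in> J4 x1 x2 x3 x4 x5 x6"
    and r2: "\<And>a b c d. lab a b c d \<Longrightarrow> \<exists>a' b' c' d' k. lab a' b' c' d' \<and> u (S2 a b c d) - sc k (u (S5 a' b' c' d')) \<in> J4 x1 x2 x3 x4 x5 x6"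
    and r3: "\<And>a b c d. lab a b c d \<Longrightarrow> \<exists>a' b' c' d' k. lab a' b' c' d' \<and> u (S3 a b c d) - sc k (u (S5 a' b' c' d')) \<in> J4 x1 x2 x3 x4 x5 x6"
    and r4: "\<And>a b c d. lab a b c d \<Longrightarrow> \<exists>a' b' c' d' k. lab a' b' c' d' \<and> u (S4 a b c d) - sc k (u (S5 a' b' c' d')) \<in> J4 x1 x2 x3 x4 x5 x6"
  shows "\<not> regular_arity4 x1 x2 x3 x4 x5 x6"
proof (rule not_reg_small[OF W])
  show "RD W (J4 x1 x2 x3 x4 x5 x6) (S1 a b c d)" if "lab a b c d" for a b c d
    using r1[OF that] r5 RD_chain by blast
  show "RD W (J4 x1 x2 x3 x4 x5 x6) (S2 a b c d)" if "lab a b c d" for a b c d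
    using r2[OF that] r5 RD_chain by blast
  show "RD W (J4 x1 x2 x3 x4 x5 x6) (S3 a b c d)" if "lab a b c d" for a b c d
    using r3[OF that] r5 RD_chain by blast
  show "RD W (J4 x1 x2 x3 x4 x5 x6) (S4 a b c d)" if "lab a b c d" for a b c d
    using r4[OF that] r5 RD_chain by blast
qed (rule r5)


lemma W_props:
  fixes f :: "nat \<Rightarrow> nat \<Rightarrow> nat \<Rightarrow> nat \<Rightarrow> tree" and P :: "nat \<Rightarrow> nat \<Rightarrow> nat \<Rightarrow> nat \<Rightarrow> bool"
  assumes fb: "\<And>a b c d. lab a b c d \<Longrightarrow> f a b c d \<in> basis4"
    and ex: "lab aa bb cc dd" "\<not> P aa bb cc dd"
  defines "W \<equiv> (\<lambda>(a,b,c,d). (u (f a b c d) :: tree \<Rightarrow> 'a::field)) ` {p\<in>L24. (\<lambda>(a,b,c,d). P a b c d) p}"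
  shows "finite W" "W \<subseteq> T4" "card W < 24"
proof -
  have sub: "{p\<in>L24. (\<lambda>(a,b,c,d). P a b c d) p} \<subseteq> L24" by blast
  show "finite W" unfolding W_def by (rule finite_img[OF sub])
  show "W \<subseteq> T4" unfolding W_def L24_def by (auto intro!: u_T4 fb)
  show "card W < 24" unfolding W_def
    by (rule card_img_lt[OF sub, of "(aa,bb,cc,dd)"]) (use ex in \<open>auto simp: L24_def\<close>)
qed

lemma W_mem: "lab a b c d \<Longrightarrow> P a b c d \<Longrightarrow>
   u (f a b c d) \<in> (\<lambda>(a,b,c,d). u (f a b c d)) ` {p\<in>L24. (\<lambda>(a,b,c,d). P a b c d) p}"
  unfolding L24_def by (rule image_eqI[of _ _ "(a,b,c,d)"]) auto

lemma F2rel: assumes l: "lab a b c d" shows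
  "u (S1 a b c d) - sc s (u (S2 a c b d)) \<in> J4 0 s 0 0 0 0"
  "u (S4 a b c d) - sc s (u (S5 a b d c)) \<in> J4 0 s 0 0 0 0"
  "u (S1 a b c d) - sc s (u (S3 a b d c)) \<in> J4 0 s 0 0 0 0"
  "u (S2 a b c d) - sc s (u (S5 a d b c)) \<in> J4 0 s 0 0 0 0"
  "u (S3 a b c d) - sc s (u (S4 a c d b)) \<in> J4 0 s 0 0 0 0"
proof -
  have l2: "lab b c d a" using labP[OF l] by blast
  show "u (S1 a b c d) - sc s (u (S2 a c b d)) \<in> J4 0 s 0 0 0 0"
    using G1[of a b c d 0 s 0 0 0 0, OF l] by (simp add: E1_def)
  show "u (S4 a b c d) - sc s (u (S5 a b d c)) \<in> J4 0 s 0 0 0 0"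
    using G2[of b c d a 0 s 0 0 0 0, OF l2] by (simp add: E2_def)
  show "u (S1 a b c d) - sc s (u (S3 a b d c)) \<in> J4 0 s 0 0 0 0"
    using G3[of a b c d 0 s 0 0 0 0, OF l] by (simp add: E3_def)
  show "u (S2 a b c d) - sc s (u (S5 a d b c)) \<in> J4 0 s 0 0 0 0"
    using G4[of a b c d 0 s 0 0 0 0, OF l] by (simp add: E4_def)
  show "u (S3 a b c d) - sc s (u (S4 a c d b)) \<in> J4 0 s 0 0 0 0"
    using G5[of a b c d 0 s 0 0 0 0, OF l] by (simp add: E5_def)
qed

lemma F2T3: assumes l: "lab a b c d" shows "u (S3 a b c d) - sc (s*s) (u (S5 a c b d)) \<in> J4 0 s 0 0 0 0"
proof -
  have "lab a c d b" using labP[OF l] by blast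
  show ?thesis by (rule Jc[OF F2rel(5)[OF l] F2rel(2)[OF \<open>lab a c d b\<close>], where c=s]) (simp add: fun_eq_iff algebra_simps)
qed

lemma F2T1: assumes l: "lab a b c d" shows "u (S1 a b c d) - sc (s*s) (u (S5 a d c b)) \<in> J4 0 s 0 0 0 0"
proof -
  have "lab a c b d" using labP[OF l] by blast
  show ?thesis by (rule Jc[OF F2rel(1)[OF l] F2rel(4)[OF \<open>lab a c b d\<close>], where c=s]) (simp add: fun_eq_iff algebra_simps)
qed

lemma F2Q: assumes l: "lab a b c d" shows "sc (s*s*s) (u (S5 a d b c)) - sc (s*s) (u (S5 a d c b)) \<in> J4 0 s 0 0 0 0"
proof -
  have "lab a b d c" using labP[OF l] by blast
  have X: "u (S1 a b c d) - sc (s*s*s) (u (S5 a d b c)) \<in> J4 0 s 0 0 0 0"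
    by (rule Jc[OF F2rel(3)[OF l] F2T3[OF \<open>lab a b d c\<close>], where c=s]) (simp add: fun_eq_iff algebra_simps)
  show ?thesis by (rule Jc[OF F2T1[OF l] X, where c="-1"]) (simp add: fun_eq_iff algebra_simps)
qed

theorem neg2: assumes s: "(s::'a::field) \<noteq> 0" shows "\<not> regular_arity4 0 s 0 0 0 0"
proof -
  define W where "W = (\<lambda>(a,b,c,d). (u (S5 a b c d) :: tree \<Rightarrow> 'a)) ` {p\<in>L24. (\<lambda>(a,b,c,d). c < d) p}"
  have Wp: "finite W" "W \<subseteq> T4" "card W < 24" unfolding W_def
    by (rule W_props[where aa=1 and bb=2 and cc=4 and dd=3]; simp add: lab_iff)+
  have Wm: "u (S5 a b c d) \<in> W" if "lab a b c d" "c < d" for a b c d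
    unfolding W_def using W_mem[of a b c d "\<lambda>a b c d. c < d" S5] that by simp
  show ?thesis
  proof (rule not_reg_red[OF Wp])
    fix a b c d assume l: "lab a b c d"
    show "RD W (J4 0 s 0 0 0 0) (S5 a b c d)"
    proof (cases "c < d")
      case True then show ?thesis using Wm[OF l] RD_self by blast
    next
      case False
      then have dc: "d < c" using labE[OF l] by auto
      have l2: "lab a b d c" "lab a c d b" using labP[OF l] by blast+
      have "u (S5 a b c d) - sc (inverse s) (u (S5 a b d c)) \<in> J4 0 s 0 0 0 0"
        by (rule Jsc[OF F2Q[OF l2(2)], where c="inverse (s*s*s)"]) (use s in \<open>simp add: fun_eq_iff field_simps\<close>)
      then show ?thesis using RD_base[OF Wm[OF l2(1) dc]] by blast
    qed
  next
    fix a b c d assume l: "lab a b c d"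
    have "lab a d c b" using labP[OF l] by blast
    then show "\<exists>a' b' c' d' k. lab a' b' c' d' \<and> u (S1 a b c d) - sc k (u (S5 a' b' c' d')) \<in> J4 0 s 0 0 0 0"
      using F2T1[OF l] by blast
  next
    fix a b c d assume l: "lab a b c d"
    have "lab a d b c" using labP[OF l] by blast
    then show "\<exists>a' b' c' d' k. lab a' b' c' d' \<and> u (S2 a b c d) - sc k (u (S5 a' b' c' d')) \<in> J4 0 s 0 0 0 0"
      using F2rel(4)[OF l] by blast
  next
    fix a b c d assume l: "lab a b c d"
    have "lab a c b d" using labP[OF l] by blast
    then show "\<exists>a' b' c' d' k. lab a' b' c' d' \<and> u (S3 a b c d) - sc k (u (S5 a' b' c' d')) \<in> J4 0 s 0 0 0 0"
      using F2T3[OF l] by blast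
  next
    fix a b c d assume l: "lab a b c d"
    have "lab a b d c" using labP[OF l] by blast
    then show "\<exists>a' b' c' d' k. lab a' b' c' d' \<and> u (S4 a b c d) - sc k (u (S5 a' b' c' d')) \<in> J4 0 s 0 0 0 0"
      using F2rel(2)[OF l] by blast
  qed
qed


lemma F3rel: assumes l: "lab a b c d" shows
  "u (S1 a b c d) - sc s (u (S2 b a c d)) \<in> J4 0 0 s 0 0 0"
  "u (S4 a b c d) - sc s (u (S5 a c b d)) \<in> J4 0 0 s 0 0 0"
  "u (S1 a b c d) - sc s (u (S4 c a b d)) \<in> J4 0 0 s 0 0 0"
  "u (S2 a b c d) - sc s (u (S3 b c a d)) \<in> J4 0 0 s 0 0 0"
  "u (S3 a b c d) - sc s (u (S5 b a c d)) \<in> J4 0 0 s 0 0 0"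
proof -
  have l2: "lab b c d a" using labP[OF l] by blast
  show "u (S1 a b c d) - sc s (u (S2 b a c d)) \<in> J4 0 0 s 0 0 0"
    using G1[of a b c d 0 0 s 0 0 0, OF l] by (simp add: E1_def)
  show "u (S4 a b c d) - sc s (u (S5 a c b d)) \<in> J4 0 0 s 0 0 0"
    using G2[of b c d a 0 0 s 0 0 0, OF l2] by (simp add: E2_def)
  show "u (S1 a b c d) - sc s (u (S4 c a b d)) \<in> J4 0 0 s 0 0 0"
    using G3[of a b c d 0 0 s 0 0 0, OF l] by (simp add: E3_def)
  show "u (S2 a b c d) - sc s (u (S3 b c a d)) \<in> J4 0 0 s 0 0 0"
    using G4[of a b c d 0 0 s 0 0 0, OF l] by (simp add: E4_def)
  show "u (S3 a b c d) - sc s (u (S5 b a c d)) \<in> J4 0 0 s 0 0 0"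
    using G5[of a b c d 0 0 s 0 0 0, OF l] by (simp add: E5_def)
qed

lemma F3T2: assumes l: "lab a b c d" shows "u (S2 a b c d) - sc (s*s) (u (S5 c b a d)) \<in> J4 0 0 s 0 0 0"
proof -
  have "lab b c a d" using labP[OF l] by blast
  show ?thesis by (rule Jc[OF F3rel(4)[OF l] F3rel(5)[OF \<open>lab b c a d\<close>], where c=s]) (simp add: fun_eq_iff algebra_simps)
qed

lemma F3T1: assumes l: "lab a b c d" shows "u (S1 a b c d) - sc (s*s) (u (S5 c b a d)) \<in> J4 0 0 s 0 0 0"
proof -
  have "lab c a b d" using labP[OF l] by blast
  show ?thesis by (rule Jc[OF F3rel(3)[OF l] F3rel(2)[OF \<open>lab c a b d\<close>], where c=s]) (simp add: fun_eq_iff algebra_simps)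
qed

lemma F3Q: assumes l: "lab a b c d" shows "sc (s*s*s) (u (S5 c a b d)) - sc (s*s) (u (S5 c b a d)) \<in> J4 0 0 s 0 0 0"
proof -
  have "lab b a c d" using labP[OF l] by blast
  have X: "u (S1 a b c d) - sc (s*s*s) (u (S5 c a b d)) \<in> J4 0 0 s 0 0 0"
    by (rule Jc[OF F3rel(1)[OF l] F3T2[OF \<open>lab b a c d\<close>], where c=s]) (simp add: fun_eq_iff algebra_simps)
  show ?thesis by (rule Jc[OF F3T1[OF l] X, where c="-1"]) (simp add: fun_eq_iff algebra_simps)
qed

theorem neg3: assumes s: "(s::'a::field) \<noteq> 0" shows "\<not> regular_arity4 0 0 s 0 0 0"
proof -
  define W where "W = (\<lambda>(a,b,c,d). (u (S5 a b c d) :: tree \<Rightarrow> 'a)) ` {p\<in>L24. (\<lambda>(a,b,c,d). b < c) p}"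
  have Wp: "finite W" "W \<subseteq> T4" "card W < 24" unfolding W_def
    by (rule W_props[where aa=1 and bb=3 and cc=2 and dd=4]; simp add: lab_iff)+
  have Wm: "u (S5 a b c d) \<in> W" if "lab a b c d" "b < c" for a b c d
    unfolding W_def using W_mem[of a b c d "\<lambda>a b c d. b < c" S5] that by simp
  show ?thesis
  proof (rule not_reg_red[OF Wp])
    fix a b c d assume l: "lab a b c d"
    show "RD W (J4 0 0 s 0 0 0) (S5 a b c d)"
    proof (cases "b < c")
      case True then show ?thesis using Wm[OF l] RD_self by blast
    next
      case False
      then have dc: "c < b" using labE[OF l] by auto
      have l2: "lab a c b d" "lab b c a d" using labP[OF l] by blast+
      have "u (S5 a b c d) - sc (inverse s) (u (S5 a c b d)) \<in> J4 0 0 s 0 0 0"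
        by (rule Jsc[OF F3Q[OF l2(2)], where c="inverse (s*s*s)"]) (use s in \<open>simp add: fun_eq_iff field_simps\<close>)
      then show ?thesis using RD_base[OF Wm[OF l2(1) dc]] by blast
    qed
  next
    fix a b c d assume l: "lab a b c d"
    have "lab c b a d" using labP[OF l] by blast
    then show "\<exists>a' b' c' d' k. lab a' b' c' d' \<and> u (S1 a b c d) - sc k (u (S5 a' b' c' d')) \<in> J4 0 0 s 0 0 0"
      using F3T1[OF l] by blast
  next
    fix a b c d assume l: "lab a b c d"
    have "lab c b a d" using labP[OF l] by blast
    then show "\<exists>a' b' c' d' k. lab a' b' c' d' \<and> u (S2 a b c d) - sc k (u (S5 a' b' c' d')) \<in> J4 0 0 s 0 0 0"
      using F3T2[OF l] by blast
  next
    fix a b c d assume l: "lab a b c d"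
    have "lab b a c d" using labP[OF l] by blast
    then show "\<exists>a' b' c' d' k. lab a' b' c' d' \<and> u (S3 a b c d) - sc k (u (S5 a' b' c' d')) \<in> J4 0 0 s 0 0 0"
      using F3rel(5)[OF l] by blast
  next
    fix a b c d assume l: "lab a b c d"
    have "lab a c b d" using labP[OF l] by blast
    then show "\<exists>a' b' c' d' k. lab a' b' c' d' \<and> u (S4 a b c d) - sc k (u (S5 a' b' c' d')) \<in> J4 0 0 s 0 0 0"
      using F3rel(2)[OF l] by blast
  qed
qed

lemma F4rel: assumes l: "lab a b c d" shows
  "u (S1 a b c d) - sc s (u (S2 b c a d)) \<in> J4 0 0 0 s 0 0"
  "u (S4 a b c d) - sc s (u (S5 a c d b)) \<in> J4 0 0 0 s 0 0"
  "u (S1 a b c d) - sc s (u (S5 c d a b)) \<in> J4 0 0 0 s 0 0"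
  "u (S2 a b c d) - sc s (u (S3 b c d a)) \<in> J4 0 0 0 s 0 0"
  "u (S3 a b c d) - sc s (u (S4 b c d a)) \<in> J4 0 0 0 s 0 0"
proof -
  have l2: "lab b c d a" using labP[OF l] by blast
  show "u (S1 a b c d) - sc s (u (S2 b c a d)) \<in> J4 0 0 0 s 0 0"
    using G1[of a b c d 0 0 0 s 0 0, OF l] by (simp add: E1_def)
  show "u (S4 a b c d) - sc s (u (S5 a c d b)) \<in> J4 0 0 0 s 0 0"
    using G2[of b c d a 0 0 0 s 0 0, OF l2] by (simp add: E2_def)
  show "u (S1 a b c d) - sc s (u (S5 c d a b)) \<in> J4 0 0 0 s 0 0"
    using G3[of a b c d 0 0 0 s 0 0, OF l] by (simp add: E3_def)
  show "u (S2 a b c d) - sc s (u (S3 b c d a)) \<in> J4 0 0 0 s 0 0"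
    using G4[of a b c d 0 0 0 s 0 0, OF l] by (simp add: E4_def)
  show "u (S3 a b c d) - sc s (u (S4 b c d a)) \<in> J4 0 0 0 s 0 0"
    using G5[of a b c d 0 0 0 s 0 0, OF l] by (simp add: E5_def)
qed

lemma F4T3: assumes l: "lab a b c d" shows "u (S3 a b c d) - sc (s*s) (u (S5 b d a c)) \<in> J4 0 0 0 s 0 0"
proof -
  have "lab b c d a" using labP[OF l] by blast
  show ?thesis by (rule Jc[OF F4rel(5)[OF l] F4rel(2)[OF \<open>lab b c d a\<close>], where c=s]) (simp add: fun_eq_iff algebra_simps)
qed

lemma F4T2: assumes l: "lab a b c d" shows "u (S2 a b c d) - sc (s*s*s) (u (S5 c a b d)) \<in> J4 0 0 0 s 0 0"
proof -
  have "lab b c d a" using labP[OF l] by blast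
  show ?thesis by (rule Jc[OF F4rel(4)[OF l] F4T3[OF \<open>lab b c d a\<close>], where c=s]) (simp add: fun_eq_iff algebra_simps)
qed

lemma F4Q: assumes l: "lab a b c d" shows "sc (s*s*s*s) (u (S5 a b c d)) - sc s (u (S5 c d a b)) \<in> J4 0 0 0 s 0 0"
proof -
  have "lab b c a d" using labP[OF l] by blast
  have X: "u (S1 a b c d) - sc (s*s*s*s) (u (S5 a b c d)) \<in> J4 0 0 0 s 0 0"
    by (rule Jc[OF F4rel(1)[OF l] F4T2[OF \<open>lab b c a d\<close>], where c=s]) (simp add: fun_eq_iff algebra_simps)
  show ?thesis by (rule Jc[OF F4rel(3)[OF l] X, where c="-1"]) (simp add: fun_eq_iff algebra_simps)
qed

theorem neg4: assumes s: "(s::'a::field) \<noteq> 0" shows "\<not> regular_arity4 0 0 0 s 0 0"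
proof -
  define W where "W = (\<lambda>(a,b,c,d). (u (S5 a b c d) :: tree \<Rightarrow> 'a)) ` {p\<in>L24. (\<lambda>(a,b,c,d). a < c) p}"
  have Wp: "finite W" "W \<subseteq> T4" "card W < 24" unfolding W_def
    by (rule W_props[where aa=3 and bb=1 and cc=2 and dd=4]; simp add: lab_iff)+
  have Wm: "u (S5 a b c d) \<in> W" if "lab a b c d" "a < c" for a b c d
    unfolding W_def using W_mem[of a b c d "\<lambda>a b c d. a < c" S5] that by simp
  show ?thesis
  proof (rule not_reg_red[OF Wp])
    fix a b c d assume l: "lab a b c d"
    show "RD W (J4 0 0 0 s 0 0) (S5 a b c d)"
    proof (cases "a < c")
      case True then show ?thesis using Wm[OF l] RD_self by blast
    next
      case False
      then have dc: "c < a" using labE[OF l] by auto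
      have l2: "lab c d a b" using labP[OF l] by blast+
      have "u (S5 a b c d) - sc (s*s*s) (u (S5 c d a b)) \<in> J4 0 0 0 s 0 0"
        by (rule Jsc[OF F4Q[OF l2], where c="- inverse s"]) (use s in \<open>simp add: fun_eq_iff field_simps\<close>)
      then show ?thesis using RD_base[OF Wm[OF l2 dc]] by blast
    qed
  next
    fix a b c d assume l: "lab a b c d"
    have "lab c d a b" using labP[OF l] by blast
    then show "\<exists>a' b' c' d' k. lab a' b' c' d' \<and> u (S1 a b c d) - sc k (u (S5 a' b' c' d')) \<in> J4 0 0 0 s 0 0"
      using F4rel(3)[OF l] by blast
  next
    fix a b c d assume l: "lab a b c d"
    have "lab c a b d" using labP[OF l] by blast
    then show "\<exists>a' b' c' d' k. lab a' b' c' d' \<and> u (S2 a b c d) - sc k (u (S5 a' b' c' d')) \<in> J4 0 0 0 s 0 0"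
      using F4T2[OF l] by blast
  next
    fix a b c d assume l: "lab a b c d"
    have "lab b d a c" using labP[OF l] by blast
    then show "\<exists>a' b' c' d' k. lab a' b' c' d' \<and> u (S3 a b c d) - sc k (u (S5 a' b' c' d')) \<in> J4 0 0 0 s 0 0"
      using F4T3[OF l] by blast
  next
    fix a b c d assume l: "lab a b c d"
    have "lab a c d b" using labP[OF l] by blast
    then show "\<exists>a' b' c' d' k. lab a' b' c' d' \<and> u (S4 a b c d) - sc k (u (S5 a' b' c' d')) \<in> J4 0 0 0 s 0 0"
      using F4rel(2)[OF l] by blast
  qed
qed


lemma F6rel: assumes l: "lab a b c d" shows
  "u (S1 a b c d) - sc s (u (S2 c b a d)) \<in> J4 0 0 0 0 0 s"
  "u (S4 a b c d) - sc s (u (S5 a d c b)) \<in> J4 0 0 0 0 0 s"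
  "u (S1 a b c d) - sc s (u (S5 d c a b)) \<in> J4 0 0 0 0 0 s"
  "u (S2 a b c d) - sc s (u (S4 d b c a)) \<in> J4 0 0 0 0 0 s"
  "u (S3 a b c d) - sc s (u (S3 c d b a)) \<in> J4 0 0 0 0 0 s"
proof -
  have l2: "lab b c d a" using labP[OF l] by blast
  show "u (S1 a b c d) - sc s (u (S2 c b a d)) \<in> J4 0 0 0 0 0 s"
    using G1[of a b c d 0 0 0 0 0 s, OF l] by (simp add: E1_def)
  show "u (S4 a b c d) - sc s (u (S5 a d c b)) \<in> J4 0 0 0 0 0 s"
    using G2[of b c d a 0 0 0 0 0 s, OF l2] by (simp add: E2_def)
  show "u (S1 a b c d) - sc s (u (S5 d c a b)) \<in> J4 0 0 0 0 0 s"
    using G3[of a b c d 0 0 0 0 0 s, OF l] by (simp add: E3_def)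
  show "u (S2 a b c d) - sc s (u (S4 d b c a)) \<in> J4 0 0 0 0 0 s"
    using G4[of a b c d 0 0 0 0 0 s, OF l] by (simp add: E4_def)
  show "u (S3 a b c d) - sc s (u (S3 c d b a)) \<in> J4 0 0 0 0 0 s"
    using G5[of a b c d 0 0 0 0 0 s, OF l] by (simp add: E5_def)
qed

lemma F6T2: assumes l: "lab a b c d" shows "u (S2 a b c d) - sc (s*s) (u (S5 d a c b)) \<in> J4 0 0 0 0 0 s"
proof -
  have "lab d b c a" using labP[OF l] by blast
  show ?thesis by (rule Jc[OF F6rel(4)[OF l] F6rel(2)[OF \<open>lab d b c a\<close>], where c=s]) (simp add: fun_eq_iff algebra_simps)
qed

lemma F6Q: assumes l: "lab a b c d" shows "sc (s*s*s - s) (u (S5 d c a b)) \<in> J4 0 0 0 0 0 s"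
proof -
  have "lab c b a d" using labP[OF l] by blast
  have X: "u (S1 a b c d) - sc (s*s*s) (u (S5 d c a b)) \<in> J4 0 0 0 0 0 s"
    by (rule Jc[OF F6rel(1)[OF l] F6T2[OF \<open>lab c b a d\<close>], where c=s]) (simp add: fun_eq_iff algebra_simps)
  show ?thesis by (rule Jc[OF F6rel(3)[OF l] X, where c="-1"]) (simp add: fun_eq_iff algebra_simps)
qed

theorem neg6a: assumes s: "(s::'a::field) \<noteq> 0" "s * s \<noteq> 1" shows "\<not> regular_arity4 0 0 0 0 0 s"
proof -
  have ne: "s*s*s - s \<noteq> 0"
  proof
    assume "s*s*s - s = 0"
    then have "s * (s*s - 1) = 0" by (simp add: algebra_simps)
    then show False using s by simp
  qed
  have S5: "u (S5 a b c d) \<in> J4 0 0 0 0 0 s" if l: "lab a b c d" for a b c d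
  proof -
    have "lab c d b a" using labP[OF l] by blast
    show ?thesis by (rule Jsc[OF F6Q[OF \<open>lab c d b a\<close>], where c="inverse (s*s*s - s)"]) (use ne in \<open>simp add: fun_eq_iff\<close>)
  qed
  have S4: "u (S4 a b c d) \<in> J4 0 0 0 0 0 s" if l: "lab a b c d" for a b c d
  proof -
    have "lab a d c b" using labP[OF l] by blast
    show ?thesis by (rule Jc[OF F6rel(2)[OF l] S5[OF \<open>lab a d c b\<close>], where c=s]) (simp add: fun_eq_iff)
  qed
  have S2: "u (S2 a b c d) \<in> J4 0 0 0 0 0 s" if l: "lab a b c d" for a b c d
  proof -
    have "lab d b c a" using labP[OF l] by blast
    show ?thesis by (rule Jc[OF F6rel(4)[OF l] S4[OF \<open>lab d b c a\<close>], where c=s]) (simp add: fun_eq_iff)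
  qed
  have S1: "u (S1 a b c d) \<in> J4 0 0 0 0 0 s" if l: "lab a b c d" for a b c d
  proof -
    have "lab d c a b" using labP[OF l] by blast
    show ?thesis by (rule Jc[OF F6rel(3)[OF l] S5[OF \<open>lab d c a b\<close>], where c=s]) (simp add: fun_eq_iff)
  qed
  define W where "W = (\<lambda>(a,b,c,d). (u (S3 a b c d) :: tree \<Rightarrow> 'a)) ` {p\<in>L24. (\<lambda>(a,b,c,d). a = 1) p}"
  have Wp: "finite W" "W \<subseteq> T4" "card W < 24" unfolding W_def
    by (rule W_props[where aa=2 and bb=1 and cc=3 and dd=4]; simp add: lab_iff)+
  have Wm: "u (S3 a b c d) \<in> W" if "lab a b c d" "a = 1" for a b c d
    unfolding W_def using W_mem[of a b c d "\<lambda>a b c d. a = 1" S3] that by simp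
  show ?thesis
  proof (rule not_reg_small[OF Wp])
    fix a b c d assume l: "lab a b c d"
    show "RD W (J4 0 0 0 0 0 s) (S1 a b c d)" using RD_J S1[OF l] by blast
    show "RD W (J4 0 0 0 0 0 s) (S2 a b c d)" using RD_J S2[OF l] by blast
    show "RD W (J4 0 0 0 0 0 s) (S4 a b c d)" using RD_J S4[OF l] by blast
    show "RD W (J4 0 0 0 0 0 s) (S5 a b c d)" using RD_J S5[OF l] by blast
    have one: "a = 1 \<or> b = 1 \<or> c = 1 \<or> d = 1" using labD[OF l] by auto
    have l2: "lab c d b a" "lab b a d c" "lab d c a b" using labP[OF l] by blast+
    note r1 = F6rel(5)[OF l, of s] and r2 = F6rel(5)[OF l2(1), of s] and r3 = F6rel(5)[OF l2(2), of s]
    have e2: "u (S3 a b c d) - sc (s*s) (u (S3 b a d c)) \<in> J4 0 0 0 0 0 s"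
      by (rule Jc[OF r1 r2, where c=s]) (simp add: fun_eq_iff algebra_simps)
    have e3: "u (S3 a b c d) - sc (s*s*s) (u (S3 d c a b)) \<in> J4 0 0 0 0 0 s"
      by (rule Jc[OF e2 r3, where c="s*s"]) (simp add: fun_eq_iff algebra_simps)
    show "RD W (J4 0 0 0 0 0 s) (S3 a b c d)"
      using one
    proof (elim disjE)
      assume "a = 1" then show ?thesis using RD_self Wm[OF l] by blast
    next
      assume "b = 1" then show ?thesis using RD_base[OF Wm[OF l2(2)] e2] by blast
    next
      assume "c = 1" then show ?thesis using RD_base[OF Wm[OF l2(1)] r1] by blast
    next
      assume "d = 1" then show ?thesis using RD_base[OF Wm[OF l2(3)] e3] by blast
    qed
  qed
qed

fun nfw6 :: "tree \<Rightarrow> nat list" where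
  "nfw6 (Node (Node (Node (Leaf a) (Leaf b)) (Leaf c)) (Leaf d)) = [d,c,a,b]"
| "nfw6 (Node (Node (Leaf a) (Node (Leaf b) (Leaf c))) (Leaf d)) = [d,a,c,b]"
| "nfw6 (Node (Node (Leaf a) (Leaf b)) (Node (Leaf c) (Leaf d))) = [a,b,c,d]"
| "nfw6 (Node (Leaf a) (Node (Node (Leaf b) (Leaf c)) (Leaf d))) = [a,d,c,b]"
| "nfw6 (Node (Leaf a) (Node (Leaf b) (Node (Leaf c) (Leaf d)))) = [a,b,c,d]"
| "nfw6 _ = []"

fun nfc6 :: "'a::field \<Rightarrow> tree \<Rightarrow> 'a" where
  "nfc6 s (Node (Node (Node (Leaf a) (Leaf b)) (Leaf c)) (Leaf d)) = s"
| "nfc6 s (Node (Node (Leaf a) (Node (Leaf b) (Leaf c))) (Leaf d)) = s * s"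
| "nfc6 s (Node (Node (Leaf a) (Leaf b)) (Node (Leaf c) (Leaf d))) = 0"
| "nfc6 s (Node (Leaf a) (Node (Node (Leaf b) (Leaf c)) (Leaf d))) = s"
| "nfc6 s (Node (Leaf a) (Node (Leaf b) (Node (Leaf c) (Leaf d)))) = 1"
| "nfc6 s _ = 0"

lemma s_facts: "(s::'a::field) * s = 1 \<Longrightarrow> s * (s * s) = s \<and> s * (s * (s * s)) = 1 \<and> s * s * s = s"
  by (metis mult.assoc mult.right_neutral)

lemma gens6: assumes s: "s * s = 1" and "g \<in> J4gens 0 0 0 0 0 s"
  shows "Lin (Kf nfw6 (nfc6 s) \<tau>) g = 0"
proof -
  from assms(2) obtain a b c d where l: "lab a b c d" and g: "g = E1 0 0 0 0 0 s a b c d \<or> g = E2 0 0 0 0 0 s a b c d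
    \<or> g = E3 0 0 0 0 0 s a b c d \<or> g = E4 0 0 0 0 0 s a b c d \<or> g = E5 0 0 0 0 0 s a b c d"
    by (rule J4gens_cases)
  note l' = labE[OF l]
  note sf = s_facts[OF s]
  from g show ?thesis
    by (elim disjE) (simp_all add: E1_def E2_def E3_def E4_def E5_def Kf_def lab_iff l' sf)
qed

lemma nf6_wok: assumes "t \<in> basis4" shows "distinct (nfw6 t) \<and> set (nfw6 t) = {1..4}"
  using assms
proof (cases rule: shape_cases)
  case (1 a b c d) then show ?thesis using labD[of d c a b] labP[OF 1(1)] by simp
next
  case (2 a b c d) then show ?thesis using labD[of d a c b] labP[OF 2(1)] by simp
next
  case (3 a b c d) then show ?thesis using labD[of a b c d] by simp
next
  case (4 a b c d) then show ?thesis using labD[of a d c b] labP[OF 4(1)] by simp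
next
  case (5 a b c d) then show ?thesis using labD[of a b c d] by simp
qed

definition kp6 :: "'a::field \<Rightarrow> tree \<Rightarrow> 'a" where
  "kp6 s t = (if t = S3 1 2 3 4 then 1 else if t = S3 3 4 2 1 then s
     else if t = S3 2 1 4 3 then s * s else if t = S3 4 3 1 2 then s * s * s else 0)"

lemma kp6_gens: assumes s: "s * s = 1" and g: "g \<in> J4gens 0 0 0 0 0 s"
  shows "Lin (kp6 s) g = 0"
proof -
  from g obtain a b c d where l: "lab a b c d" and g: "g = E1 0 0 0 0 0 s a b c d \<or> g = E2 0 0 0 0 0 s a b c d
    \<or> g = E3 0 0 0 0 0 s a b c d \<or> g = E4 0 0 0 0 0 s a b c d \<or> g = E5 0 0 0 0 0 s a b c d"
    by (rule J4gens_cases)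
  note l' = labE[OF l]
  note sf = s_facts[OF s]
  from g show ?thesis
    by (elim disjE) (auto simp: E1_def E2_def E3_def E4_def E5_def kp6_def lab_iff l' s sf)
qed

theorem big6: assumes s: "(s::'a::field) * s = 1" shows "\<not> regular_arity4 0 0 0 0 0 s"
proof (rule not_reg_big[where I="insert None (Some ` P4)"
    and w="\<lambda>i. case i of None \<Rightarrow> u (S3 1 2 3 4) | Some \<tau> \<Rightarrow> u (s5l (word \<tau>))"
    and k="\<lambda>i. case i of None \<Rightarrow> kp6 s | Some \<tau> \<Rightarrow> Kf nfw6 (nfc6 s) \<tau>"])
  show "finite (insert None (Some ` P4))" using finite_P4 by simp
  show "24 < card (insert None (Some ` P4))" using card_I by simp
  show "(case i of None \<Rightarrow> u (S3 1 2 3 4) | Some \<tau> \<Rightarrow> u (s5l (word \<tau>))) \<in> T4"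
    if "i \<in> insert None (Some ` P4)" for i
    using that by (auto intro!: u_T4 s5l_basis simp: lab_iff)
  show "Lin (case i of None \<Rightarrow> kp6 s | Some \<tau> \<Rightarrow> Kf nfw6 (nfc6 s) \<tau>) g = 0"
    if "i \<in> insert None (Some ` P4)" "g \<in> J4gens 0 0 0 0 0 s" for i g
    using that kp6_gens[OF s] gens6[OF s] by (auto split: option.split)
  show "Lin (case i of None \<Rightarrow> kp6 s | Some \<tau> \<Rightarrow> Kf nfw6 (nfc6 s) \<tau>)
          (case j of None \<Rightarrow> u (S3 1 2 3 4) | Some \<tau> \<Rightarrow> u (s5l (word \<tau>))) = (if i = j then 1 else 0)"
    if "i \<in> insert None (Some ` P4)" "j \<in> insert None (Some ` P4)" for i j
  proof -
    have b: "S3 1 2 3 4 \<in> basis4" by (simp add: lab_iff)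
    have s5_6: "nfw6 (s5l (word \<tau>)) = word \<tau> \<and> nfc6 s (s5l (word \<tau>)) = 1" for \<tau>
      by (simp add: s5l_def word_def)
    show ?thesis
    proof (cases i)
      case None
      then show ?thesis using that b s5l_basis
        by (cases j) (auto simp: kp6_def s5l_def)
    next
      case (Some \<tau>)
      then have \<tau>: "\<tau> \<in> P4" using that by auto
      show ?thesis
      proof (cases j)
        case None
        then show ?thesis using Some b by (simp add: Kf_def)
      next
        case (Some \<tau>')
        then have \<tau>': "\<tau>' \<in> P4" using that by auto
        show ?thesis using \<open>i = Some \<tau>\<close> Some s5l_basis[OF \<tau>'] word_inj[OF \<tau>' \<tau>]
          by (auto simp: Kf_def s5_6)
      qed
    qed
  qed
qed


lemma sq1: "(s::'a::field) * s = 1 \<longleftrightarrow> s = 1 \<or> s = -1"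
proof
  assume "s * s = 1"
  then have "(s - 1) * (s + 1) = 0" by (simp add: algebra_simps)
  then show "s = 1 \<or> s = -1" by (auto simp: eq_neg_iff_add_eq_0)
qed auto

theorem mainTheorem9:
  fixes x1 x2 x3 x4 x5 x6 :: "'a::field_char_0"
  assumes "length (filter (\<lambda>c. c \<noteq> 0) [x1, x2, x3, x4, x5, x6]) \<le> 1"
  shows "regular_arity4 x1 x2 x3 x4 x5 x6 \<longleftrightarrow>
    ((x1, x2, x3, x4, x5, x6) = (1, 0, 0, 0, 0, 0) \<or>
     (\<exists>s. (x1, x2, x3, x4, x5, x6) = (0, 0, 0, 0, s, 0) \<and> s \<noteq> 1 \<and> s \<noteq> -1))"
proof -
  have z: "x1 = 0 \<or> x2 = 0" "x1 = 0 \<or> x3 = 0" "x1 = 0 \<or> x4 = 0" "x1 = 0 \<or> x5 = 0" "x1 = 0 \<or> x6 = 0"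
    "x2 = 0 \<or> x3 = 0" "x2 = 0 \<or> x4 = 0" "x2 = 0 \<or> x5 = 0" "x2 = 0 \<or> x6 = 0"
    "x3 = 0 \<or> x4 = 0" "x3 = 0 \<or> x5 = 0" "x3 = 0 \<or> x6 = 0"
    "x4 = 0 \<or> x5 = 0" "x4 = 0 \<or> x6 = 0" "x5 = 0 \<or> x6 = 0"
    using assms by (auto split: if_splits)
  consider (c1) "x1 \<noteq> 0" | (c2) "x2 \<noteq> 0" | (c3) "x3 \<noteq> 0" | (c4) "x4 \<noteq> 0" | (c6) "x6 \<noteq> 0"
    | (c5) "x1 = 0" "x2 = 0" "x3 = 0" "x4 = 0" "x6 = 0" by blast
  then show ?thesis
  proof cases
    case c1
    then have e: "x2 = 0" "x3 = 0" "x4 = 0" "x5 = 0" "x6 = 0" using z by auto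
    show ?thesis
    proof (cases "x1 = 1")
      case True then show ?thesis using e pos1 by simp
    next
      case False then show ?thesis using e c1 neg1[OF c1 False] by simp
    qed
  next
    case c2
    then have e: "x1 = 0" "x3 = 0" "x4 = 0" "x5 = 0" "x6 = 0" using z by auto
    then show ?thesis using c2 neg2[OF c2] by simp
  next
    case c3
    then have e: "x1 = 0" "x2 = 0" "x4 = 0" "x5 = 0" "x6 = 0" using z by auto
    then show ?thesis using c3 neg3[OF c3] by simp
  next
    case c4
    then have e: "x1 = 0" "x2 = 0" "x3 = 0" "x5 = 0" "x6 = 0" using z by auto
    then show ?thesis using c4 neg4[OF c4] by simp
  next
    case c6
    then have e: "x1 = 0" "x2 = 0" "x3 = 0" "x4 = 0" "x5 = 0" using z by auto
    have "\<not> regular_arity4 0 0 0 0 0 x6"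
    proof (cases "x6 * x6 = 1")
      case True then show ?thesis by (rule big6)
    next
      case False then show ?thesis by (rule neg6a[OF c6])
    qed
    then show ?thesis using e c6 by simp
  next
    case c5
    show ?thesis
    proof (cases "x5 * x5 = 1")
      case True
      then have "\<not> regular_arity4 0 0 0 0 x5 0" by (rule big5)
      then show ?thesis using c5 True sq1[of x5] by auto
    next
      case False
      then have "regular_arity4 0 0 0 0 x5 0" by (rule pos5)
      then show ?thesis using c5 False sq1[of x5] by auto
    qed
  qed
qed


end
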